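(* Let $w\in\tilde S_n$. (1) If $[m_\lambda]\tilde F_w\ne0$ then $\lambda\preceq\lambda(w)$. (2) $[m_{\lambda(w)}]\tilde F_w=1$.
   Context: $\tilde S_n$ ($n>2$) is realized as bijections $w:\mathbb Z\to\mathbb Z$ with $w(i+n)=w(i)+n$ and $\sum_{i=1}^n w(i)=\sum_{i=1}^n i$, generated by $s_0,\ldots,s_{n-1}$. $\tilde F_w=\sum x_1^{\ell(v_1)}x_2^{\ell(v_2)}\cdots$ over infinite sequences of cyclically decreasing elements (having a reduced word in which each letter of $\mathbb Z/n\mathbb Z$ occurs at most once and $i+1$ precedes $i$ whenever both occur), all but finitely many the identity, with $v_1v_2\cdots=w$ and $\sum\ell(v_i)=\ell(w)$. The code of $u$ is $c(u)=(c_1,\ldots,c_n)$, $c_i=\#\{j\in\mathbb Z: j>i,\ u(j)<u(i)\}$; $\lambda(w)$ is the partition conjugate to the sorted (decreasing) rearrangement of $c(w^{-1})$. $[m_\lambda]f$ is the coefficient of the monomial symmetric function $m_\lambda$ in $f$. For partitions of equal size, $\lambda\preceq\mu$ means $\lambda=\mu$ or there is $k>0$ with $\lambda_1+\cdots+\lambda_j=\mu_1+\cdots+\mu_j$ for $j<k$ and $\lambda_1+\cdots+\lambda_k<\mu_1+\cdots+\mu_k$. *)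

theory Defs
  imports Main
begin

definition affine_perm :: "nat \<Rightarrow> (int \<Rightarrow> int) \<Rightarrow> bool" where
  "affine_perm n w \<longleftrightarrow> bij w \<and> (\<forall>i. w (i + int n) = w i + int n)
     \<and> (\<Sum>i\<in>{1..int n}. w i) = (\<Sum>i\<in>{1..int n}. i)"

definition s_gen :: "nat \<Rightarrow> nat \<Rightarrow> int \<Rightarrow> int" where
  "s_gen n k j = (if j mod int n = int k mod int n then j + 1
                  else if j mod int n = (int k + 1) mod int n then j - 1 else j)"

definition word_prod :: "nat \<Rightarrow> nat list \<Rightarrow> int \<Rightarrow> int" where
  "word_prod n ws = foldr (\<lambda>a f. s_gen n a \<circ> f) ws id"

definition aff_length :: "nat \<Rightarrow> (int \<Rightarrow> int) \<Rightarrow> nat" where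
  "aff_length n w = (LEAST k. \<exists>ws. length ws = k \<and> set ws \<subseteq> {..<n} \<and> word_prod n ws = w)"

definition reduced_word :: "nat \<Rightarrow> nat list \<Rightarrow> (int \<Rightarrow> int) \<Rightarrow> bool" where
  "reduced_word n ws w \<longleftrightarrow> set ws \<subseteq> {..<n} \<and> word_prod n ws = w \<and> length ws = aff_length n w"

definition cyc_dec :: "nat \<Rightarrow> (int \<Rightarrow> int) \<Rightarrow> bool" where
  "cyc_dec n v \<longleftrightarrow> (\<exists>ws. reduced_word n ws v \<and> distinct ws \<and>
     (\<forall>i p q. i < n \<and> p < length ws \<and> q < length ws \<and> ws ! p = (i + 1) mod n \<and> ws ! q = i
        \<longrightarrow> p < q))"

text \<open>Coefficient of the monomial x_1^{a_1} ... x_k^{a_k} in the affine Stanley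
  symmetric function F_w: number of length-additive factorisations w = v_1 ... v_k into
  cyclically decreasing elements with l(v_i) = a_i (the remaining v_i are the identity).\<close>
definition aff_stanley_monomial_coeff :: "nat \<Rightarrow> (int \<Rightarrow> int) \<Rightarrow> nat list \<Rightarrow> nat" where
  "aff_stanley_monomial_coeff n w \<alpha> = card {vs. length vs = length \<alpha> \<and>
     (\<forall>i<length vs. cyc_dec n (vs ! i) \<and> aff_length n (vs ! i) = \<alpha> ! i) \<and>
     foldr (\<circ>) vs id = w \<and> (\<Sum>v\<leftarrow>vs. aff_length n v) = aff_length n w}"

text \<open>[m_lambda] F_w for a partition lambda (F_w is symmetric, so this is the
  coefficient of x^lambda).\<close>
definition m_coeff :: "nat \<Rightarrow> (int \<Rightarrow> int) \<Rightarrow> nat list \<Rightarrow> nat" where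
  "m_coeff n w la = aff_stanley_monomial_coeff n w la"

definition is_partition :: "nat list \<Rightarrow> bool" where
  "is_partition la \<longleftrightarrow> sorted_wrt (\<ge>) la \<and> 0 \<notin> set la"

definition aff_code :: "nat \<Rightarrow> (int \<Rightarrow> int) \<Rightarrow> nat list" where
  "aff_code n u = map (\<lambda>i. card {j::int. j > i \<and> u j < u i}) [1..int n]"

definition conj_part :: "nat list \<Rightarrow> nat list" where
  "conj_part \<mu> = map (\<lambda>j. length (filter (\<lambda>x. j \<le> x) \<mu>)) [1..<Suc (foldr max \<mu> 0)]"

definition lam :: "nat \<Rightarrow> (int \<Rightarrow> int) \<Rightarrow> nat list" where
  "lam n w = conj_part (rev (sort (aff_code n (inv w))))"

definition part_prec :: "nat list \<Rightarrow> nat list \<Rightarrow> bool" where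
  "part_prec la \<mu> \<longleftrightarrow> la = \<mu> \<or> (\<exists>k>0. (\<forall>j<k. sum_list (take j la) = sum_list (take j \<mu>))
       \<and> sum_list (take k la) < sum_list (take k \<mu>))"

end

theory Submission
  imports Defs "HOL-Library.Multiset"
begin


lemma modsucc_ne: "n > (1::nat) \<Longrightarrow> (x + 1) mod int n \<noteq> x mod int n"
proof
  assume "n>1" "(x + 1) mod int n = x mod int n"
  then have "int n dvd (x+1) - x" by (metis mod_eq_dvd_iff)
  then show False using \<open>n>1\<close> by auto
qed

lemma sg_eq1: "j mod int n = int k mod int n \<Longrightarrow> s_gen n k j = j + 1"
  by (simp add: s_gen_def)
lemma sg_eq2: "n > 1 \<Longrightarrow> j mod int n = (int k + 1) mod int n \<Longrightarrow> s_gen n k j = j - 1"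
  unfolding s_gen_def using modsucc_ne[of n "int k"] by auto
lemma sg_eq3: "j mod int n \<noteq> int k mod int n \<Longrightarrow> j mod int n \<noteq> (int k + 1) mod int n \<Longrightarrow> s_gen n k j = j"
  by (simp add: s_gen_def)

lemma sg_inv: assumes "n > 1" shows "s_gen n k (s_gen n k j) = j"
proof -
  consider "j mod int n = int k mod int n" | "j mod int n = (int k + 1) mod int n"
    | "j mod int n \<noteq> int k mod int n \<and> j mod int n \<noteq> (int k + 1) mod int n" by blast
  then show ?thesis
  proof cases
    case 1
    then have "(j+1) mod int n = (int k + 1) mod int n" by (metis mod_add_left_eq)
    then show ?thesis using 1 sg_eq1 sg_eq2 assms by auto
  next
    case 2
    then have "(j-1) mod int n = int k mod int n" by (metis add_diff_cancel_right' mod_diff_left_eq)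
    then show ?thesis using 2 sg_eq1 sg_eq2 assms by auto
  next
    case 3 then show ?thesis using sg_eq3 by auto
  qed
qed

lemma sg_comp_self: "n > 1 \<Longrightarrow> s_gen n k \<circ> s_gen n k = id"
  using sg_inv by auto

lemma sg_bij: "n > 1 \<Longrightarrow> bij (s_gen n k)"
  using sg_inv by (metis bij_betw_byWitness top_greatest subsetI UNIV_I)

lemma sg_per: "s_gen n k (j + int n) = s_gen n k j + int n"
  by (simp add: s_gen_def)

lemma sg_inv_eq: "n > 1 \<Longrightarrow> inv (s_gen n k) = s_gen n k"
  by (metis inv_unique_comp sg_comp_self)

definition per :: "nat \<Rightarrow> (int \<Rightarrow> int) \<Rightarrow> bool" where
  "per n u \<longleftrightarrow> bij u \<and> (\<forall>i. u (i + int n) = u i + int n)"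

lemma per_shift: assumes "per n u" shows "u (i + t * int n) = u i + t * int n"
proof -
  have P: "\<And>i. u (i + int n) = u i + int n" using assms per_def by auto
  have pos: "u (i + int m * int n) = u i + int m * int n" for m :: nat and i
  proof (induction m arbitrary: i)
    case (Suc m)
    have "u (i + int (Suc m) * int n) = u ((i + int m * int n) + int n)" by (simp add: algebra_simps)
    also have "\<dots> = u (i + int m * int n) + int n" using P by simp
    also have "\<dots> = u i + int (Suc m) * int n" using Suc by (simp add: algebra_simps)
    finally show ?case .
  qed simp
  show ?thesis
  proof (cases "t \<ge> 0")
    case True then show ?thesis using pos[of i "nat t"] by simp
  next
    case False
    then have "u (i + t * int n) + int (nat (-t)) * int n = u i" 
      using pos[of "i + t*int n" "nat (-t)"] by (simp add: algebra_simps)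
    then show ?thesis using False by (simp add: algebra_simps)
  qed
qed

lemma per_id: "per n id" by (simp add: per_def)
lemma per_comp: "per n u \<Longrightarrow> per n v \<Longrightarrow> per n (u \<circ> v)"
  by (auto simp: per_def bij_comp)
lemma per_sg: "n > 1 \<Longrightarrow> per n (s_gen n k)"
  by (simp add: per_def sg_bij sg_per)
lemma per_inv: assumes "per n u" shows "per n (inv u)"
proof -
  have b: "bij u" and P: "\<And>i. u (i + int n) = u i + int n" using assms per_def by auto
  have "inv u (i + int n) = inv u i + int n" for i
  proof -
    have "u (inv u i + int n) = i + int n" using P b by (simp add: bij_is_surj surj_f_inv_f)
    then show ?thesis using b by (metis bij_inv_eq_iff)
  qed
  then show ?thesis using b bij_imp_bij_inv per_def by auto
qed

lemma affine_per: "affine_perm n w \<Longrightarrow> per n w"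
  by (simp add: affine_perm_def per_def)

lemma word_prod_Nil: "word_prod n [] = id" by (simp add: word_prod_def)
lemma word_prod_Cons: "word_prod n (a # ws) = s_gen n a \<circ> word_prod n ws"
  by (simp add: word_prod_def)
lemma word_prod_append: "word_prod n (xs @ ys) = word_prod n xs \<circ> word_prod n ys"
  by (induction xs) (auto simp: word_prod_Nil word_prod_Cons)

lemma per_word: "n > 1 \<Longrightarrow> per n (word_prod n ws)"
  by (induction ws) (auto simp: word_prod_Nil word_prod_Cons per_id per_comp per_sg)


lemma resid_unique:
  assumes "per n x" "n > 0"
  shows "card {i\<in>{1..int n}. x i mod int n = c mod int n} = 1"
proof -
  have b: "bij x" using assms per_def by auto
  obtain j where j: "x j = c" using b by (metis bij_pointE)
  define i0 where "i0 = (j - 1) mod int n + 1"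
  define t where "t = (j - 1) div int n"
  have ji: "j = i0 + t * int n" unfolding i0_def t_def by (simp add: algebra_simps)
  have i0W: "i0 \<in> {1..int n}" unfolding i0_def using assms(2) by (simp add: pos_mod_bound pos_mod_sign add1_zle_eq)
  have "x j = x i0 + t * int n" using per_shift[OF assms(1)] ji by simp
  then have i0c: "x i0 mod int n = c mod int n" using j by (metis mod_mult_self1)
  have uniq: "i = i0" if "i \<in> {1..int n}" "x i mod int n = c mod int n" for i
  proof -
    have "x i mod int n = x i0 mod int n" using that i0c by simp
    then have "int n dvd x i - x i0" by (simp add: mod_eq_dvd_iff)
    then obtain s where s: "x i - x i0 = int n * s" by (erule dvdE)
    then have "x i = x i0 + s * int n" by (simp add: algebra_simps)
    then have "x i = x (i0 + s * int n)" using per_shift[OF assms(1)] by simp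
    then have e: "i = i0 + s * int n" using b by (meson bij_def inj_eq)
    have "s = 0"
    proof (rule ccontr)
      assume "s \<noteq> 0"
      then consider "s \<ge> 1" | "s \<le> -1" by linarith
      then show False
      proof cases
        case 1 then have "s * int n \<ge> 1 * int n" by (intro mult_right_mono) auto
        then show False using that(1) i0W e by simp
      next
        case 2 then have "s * int n \<le> (-1) * int n" by (intro mult_right_mono) auto
        then show False using that(1) i0W e by simp
      qed
    qed
    then show ?thesis using e by simp
  qed
  have "{i\<in>{1..int n}. x i mod int n = c mod int n} = {i0}" using uniq i0W i0c by blast
  then show ?thesis by simp
qed
lemma sg_formula: assumes "n > 1"
  shows "s_gen n k v = v + (if v mod int n = int k mod int n then 1 else 0)
                        - (if v mod int n = (int k + 1) mod int n then 1 else 0)"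
proof -
  have ne: "(int k + 1) mod int n \<noteq> int k mod int n" using modsucc_ne[OF assms] .
  show ?thesis
  proof (cases "v mod int n = int k mod int n")
    case True
    then have "v mod int n \<noteq> (int k + 1) mod int n" using ne by simp
    then show ?thesis using True sg_eq1 by simp
  next
    case False
    then show ?thesis
    proof (cases "v mod int n = (int k + 1) mod int n")
      case True then show ?thesis using False sg_eq2[OF assms] by simp
    next
      case F2: False then show ?thesis using False sg_eq3 by simp
    qed
  qed
qed
lemma sum_ind: "finite A \<Longrightarrow> (\<Sum>i\<in>A. (if P i then 1 else 0::int)) = int (card {i\<in>A. P i})"
proof -
  assume "finite A"
  have "(\<Sum>i\<in>A. (if P i then 1 else 0::int)) = (\<Sum>i\<in>{i\<in>A. P i}. 1)"
    using \<open>finite A\<close> by (simp add: sum.inter_filter[symmetric])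
  then show ?thesis by simp
qed

lemma affine_sg: assumes "n > 1" "affine_perm n x" shows "affine_perm n (s_gen n k \<circ> x)"
proof -
  have px: "per n x" using affine_per assms by auto
  have p: "per n (s_gen n k \<circ> x)" using per_comp[OF per_sg px] assms by auto
  let ?W = "{1..int n}"
  have c1: "(\<Sum>i\<in>?W. (if x i mod int n = int k mod int n then 1 else 0::int)) = 1"
    using resid_unique[OF px, of "int k"] assms by (simp add: sum_ind)
  have c2: "(\<Sum>i\<in>?W. (if x i mod int n = (int k + 1) mod int n then 1 else 0::int)) = 1"
    using resid_unique[OF px, of "int k + 1"] assms by (simp add: sum_ind)
  have "(\<Sum>i\<in>?W. s_gen n k (x i)) = (\<Sum>i\<in>?W. x i) + (\<Sum>i\<in>?W. (if x i mod int n = int k mod int n then 1 else 0::int))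
      - (\<Sum>i\<in>?W. (if x i mod int n = (int k + 1) mod int n then 1 else 0::int))"
    by (simp add: sg_formula[OF assms(1)] sum.distrib sum_subtractf)
  also have "\<dots> = (\<Sum>i\<in>?W. x i)" using c1 c2 by simp
  finally show ?thesis using p assms(2) by (simp add: affine_perm_def per_def)
qed

lemma affine_id: "affine_perm n id" by (simp add: affine_perm_def)

lemma affine_word: "n > 1 \<Longrightarrow> affine_perm n x \<Longrightarrow> affine_perm n (word_prod n ws \<circ> x)"
  by (induction ws) (auto simp: word_prod_Nil word_prod_Cons affine_sg comp_assoc)


definition cf :: "(int \<Rightarrow> int) \<Rightarrow> int \<Rightarrow> nat" where
  "cf u i = card {j. j > i \<and> u j < u i}"

lemma per_bounded: assumes "per n u" "n > 0" shows "\<exists>M. \<forall>j. \<bar>u j - j\<bar> \<le> M"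
proof -
  define M where "M = Max ((\<lambda>r. \<bar>u r - r\<bar>) ` {1..int n})"
  have "\<bar>u j - j\<bar> \<le> M" for j
  proof -
    define r where "r = (j - 1) mod int n + 1"
    define t where "t = (j - 1) div int n"
    have jr: "j = r + t * int n" unfolding r_def t_def by (simp add: algebra_simps)
    have rW: "r \<in> {1..int n}" unfolding r_def using assms(2) by (simp add: pos_mod_bound pos_mod_sign add1_zle_eq)
    have "u j - j = u r - r" using per_shift[OF assms(1)] jr by simp
    moreover have "\<bar>u r - r\<bar> \<le> M" unfolding M_def using rW by (intro Max_ge) auto
    ultimately show ?thesis by simp
  qed
  then show ?thesis by blast
qed

lemma cf_finite: assumes "per n u" "n > 0" shows "finite {j. j > i \<and> u j < u i}"
proof -
  obtain M where M: "\<And>j. \<bar>u j - j\<bar> \<le> M" using per_bounded[OF assms] by blast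
  have "{j. j > i \<and> u j < u i} \<subseteq> {i<..u i + M}"
  proof
    fix j assume "j \<in> {j. j > i \<and> u j < u i}"
    then have "j > i" "u j < u i" by auto
    moreover have "\<bar>u j - j\<bar> \<le> M" by (rule M)
    ultimately show "j \<in> {i<..u i + M}" by auto
  qed
  then show ?thesis by (rule finite_subset) simp
qed

lemma card_invol: assumes "\<And>j. s (s j) = j" shows "card {j. Q (s j)} = card {j. Q j}"
proof -
  have "bij_betw s {j. Q (s j)} {j. Q j}"
    by (rule bij_betw_byWitness[where f'=s]) (auto simp: assms)
  then show ?thesis by (rule bij_betw_same_card)
qed

lemma cf_per: assumes "per n u" shows "cf u (i + int n) = cf u i"
proof -
  have P: "\<And>i. u (i + int n) = u i + int n" using assms per_def by auto
  have Pm: "u (j - int n) = u j - int n" for j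
  proof -
    have "u ((j - int n) + int n) = u (j - int n) + int n" by (rule P)
    then show ?thesis by simp
  qed
  have "bij_betw (\<lambda>j. j + int n) {j. j > i \<and> u j < u i} {j. j > i + int n \<and> u j < u (i + int n)}"
  proof (rule bij_betw_byWitness[where f'="\<lambda>j. j - int n"])
    show "\<forall>a\<in>{j. i < j \<and> u j < u i}. a + int n - int n = a" by simp
    show "\<forall>a\<in>{j. i + int n < j \<and> u j < u (i + int n)}. a - int n + int n = a" by simp
    show "(\<lambda>j. j + int n) ` {j. i < j \<and> u j < u i} \<subseteq> {j. i + int n < j \<and> u j < u (i + int n)}"
    proof
      fix x assume "x \<in> (\<lambda>j. j + int n) ` {j. i < j \<and> u j < u i}"
      then obtain j where "x = j + int n" "i < j" "u j < u i" by auto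
      then show "x \<in> {j. i + int n < j \<and> u j < u (i + int n)}" using P[of j] P[of i] by simp
    qed
    show "(\<lambda>j. j - int n) ` {j. i + int n < j \<and> u j < u (i + int n)} \<subseteq> {j. i < j \<and> u j < u i}"
    proof
      fix x assume "x \<in> (\<lambda>j. j - int n) ` {j. i + int n < j \<and> u j < u (i + int n)}"
      then obtain j where "x = j - int n" "i + int n < j" "u j < u (i + int n)" by auto
      then show "x \<in> {j. i < j \<and> u j < u i}" using Pm[of j] P[of i] by simp
    qed
  qed
  then have "card {j. j > i \<and> u j < u i} = card {j. j > i + int n \<and> u j < u (i + int n)}"
    by (rule bij_betw_same_card)
  then show ?thesis unfolding cf_def by simp
qed

lemma cf_per_shift: assumes "per n u" shows "cf u (i + t * int n) = cf u i"
proof -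
  have pos: "cf u (i + int m * int n) = cf u i" for m :: nat and i
  proof (induction m arbitrary: i)
    case (Suc m)
    have "cf u (i + int (Suc m) * int n) = cf u ((i + int m * int n) + int n)" by (simp add: algebra_simps)
    also have "\<dots> = cf u i" using cf_per[OF assms] Suc by simp
    finally show ?case .
  qed simp
  show ?thesis
  proof (cases "t \<ge> 0")
    case True then show ?thesis using pos[where m="nat t" and i=i] by simp
  next
    case False
    have A: "cf u ((i + t * int n) + int (nat (-t)) * int n) = cf u (i + t * int n)"
      by (rule pos)
    have B: "(i + t * int n) + int (nat (-t)) * int n = i" using False by (simp add: algebra_simps)
    from A have "cf u i = cf u (i + t * int n)" unfolding B .
    then show ?thesis by simp
  qed
qed

lemma cf_mod: assumes "per n u" "n > 0" shows "cf u i = cf u (i mod int n)"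
proof -
  have "i = i mod int n + (i div int n) * int n" by simp
  then show ?thesis using cf_per_shift[OF assms(1), of "i mod int n" "i div int n"] by simp
qed


lemma cf_comp_invol: assumes "\<And>j. s (s j) = j"
  shows "cf (u \<circ> s) i = card {j. s j > i \<and> u j < u (s i)}"
proof -
  have "cf (u \<circ> s) i = card {j. (\<lambda>x. s x > i \<and> u x < u (s i)) (s j)}"
    unfolding cf_def using assms by simp
  also have "\<dots> = card {j. s j > i \<and> u j < u (s i)}" by (rule card_invol[OF assms])
  finally show ?thesis .
qed

lemma sg_cases: assumes "n > 1"
  shows "(s_gen n a j = j + 1 \<and> j mod int n = int a mod int n)
       \<or> (s_gen n a j = j - 1 \<and> j mod int n = (int a + 1) mod int n)
       \<or> (s_gen n a j = j \<and> j mod int n \<noteq> int a mod int n \<and> j mod int n \<noteq> (int a + 1) mod int n)"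
  using sg_formula[OF assms, of a j] modsucc_ne[OF assms, of "int a"] by (auto split: if_splits)

lemma sg_a: "s_gen n a (int a) = int a + 1" by (simp add: sg_eq1)
lemma sg_a1: "n > 1 \<Longrightarrow> s_gen n a (int a + 1) = int a" by (simp add: sg_eq2)

lemma mod2_ne: assumes "n > 2" shows "(x + 2) mod int n \<noteq> x mod int n" "(x + 2) mod int n \<noteq> (x + 1) mod int n"
proof -
  show "(x + 2) mod int n \<noteq> x mod int n"
  proof
    assume "(x + 2) mod int n = x mod int n"
    then have "int n dvd (x+2) - x" by (simp add: mod_eq_dvd_iff)
    then have "int n dvd 2" by simp
    then show False using assms by (auto dest: zdvd_imp_le)
  qed
  show "(x + 2) mod int n \<noteq> (x + 1) mod int n"
    using modsucc_ne[of n "x+1"] assms by (simp add: add.assoc)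
qed

lemma sg_a2: "n > 2 \<Longrightarrow> s_gen n a (int a + 2) = int a + 2"
  using mod2_ne[of n "int a"] by (intro sg_eq3) auto

lemma R1: assumes "n > 2" "u (int a) < u (int a + 1)" "per n u"
  shows "cf (u \<circ> s_gen n a) (int a) = cf u (int a + 1) + 1"
proof -
  let ?s = "s_gen n a"
  have inv: "\<And>j. ?s (?s j) = j" using sg_inv assms by auto
  have "{j. ?s j > int a \<and> u j < u (?s (int a))} = insert (int a) {j. j > int a + 1 \<and> u j < u (int a + 1)}"
  proof (intro set_eqI iffI)
    fix j assume j: "j \<in> {j. ?s j > int a \<and> u j < u (?s (int a))}"
    then have j1: "?s j > int a" "u j < u (int a + 1)" using sg_a by auto
    show "j \<in> insert (int a) {j. j > int a + 1 \<and> u j < u (int a + 1)}"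
    proof (cases "j = int a \<or> j = int a + 1")
      case True then show ?thesis using j1 by auto
    next
      case False
      have "j > int a + 1" using sg_cases[of n a j] assms j1 False by auto
      then show ?thesis using j1 by auto
    qed
  next
    fix j assume j: "j \<in> insert (int a) {j. j > int a + 1 \<and> u j < u (int a + 1)}"
    show "j \<in> {j. ?s j > int a \<and> u j < u (?s (int a))}"
    proof (cases "j = int a")
      case True then show ?thesis using assms sg_a by auto
    next
      case False
      then have "j > int a + 1" "u j < u (int a + 1)" using j by auto
      moreover have "?s j > int a" using sg_cases[of n a j] assms \<open>j > int a + 1\<close> by auto
      ultimately show ?thesis using sg_a by auto
    qed
  qed
  moreover have "finite {j. j > int a + 1 \<and> u j < u (int a + 1)}" using cf_finite[OF assms(3)] assms(1) by simp
  ultimately show ?thesis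
    unfolding cf_comp_invol[OF inv] using sg_a[of n a] by (simp add: cf_def)
qed

lemma R2: assumes "n > 2" "u (int a) < u (int a + 1)" "per n u"
  shows "cf (u \<circ> s_gen n a) (int a + 1) = cf u (int a)"
proof -
  let ?s = "s_gen n a"
  have inv: "\<And>j. ?s (?s j) = j" using sg_inv assms by auto
  have "{j. ?s j > int a + 1 \<and> u j < u (?s (int a + 1))} = {j. j > int a \<and> u j < u (int a)}"
  proof (intro set_eqI iffI)
    fix j assume j: "j \<in> {j. ?s j > int a + 1 \<and> u j < u (?s (int a + 1))}"
    then have j1: "?s j > int a + 1" "u j < u (int a)" using sg_a1 assms by auto
    have "j > int a" using sg_cases[of n a j] assms j1 by auto
    then show "j \<in> {j. j > int a \<and> u j < u (int a)}" using j1 by auto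
  next
    fix j assume j: "j \<in> {j. j > int a \<and> u j < u (int a)}"
    then have j1: "j > int a" "u j < u (int a)" by auto
    have "j \<noteq> int a + 1" using j1 assms(2) by auto
    then consider "j = int a + 2" | "j > int a + 2" using j1 by linarith
    then have "?s j > int a + 1"
    proof cases
      case 1 then show ?thesis using sg_a2 assms by auto
    next
      case 2 then show ?thesis using sg_cases[of n a j] assms by auto
    qed
    then show "j \<in> {j. ?s j > int a + 1 \<and> u j < u (?s (int a + 1))}" using j1 sg_a1 assms by auto
  qed
  then show ?thesis
    unfolding cf_comp_invol[OF inv] using sg_a1[of n a] assms by (simp add: cf_def)
qed

lemma R3: assumes "n > 2" "i mod int n \<noteq> int a mod int n" "i mod int n \<noteq> (int a + 1) mod int n"
  shows "cf (u \<circ> s_gen n a) i = cf u i"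
proof -
  let ?s = "s_gen n a"
  have inv: "\<And>j. ?s (?s j) = j" using sg_inv assms by auto
  have si: "?s i = i" using sg_eq3 assms by auto
  have "{j. ?s j > i \<and> u j < u (?s i)} = {j. j > i \<and> u j < u i}"
  proof (intro set_eqI iffI)
    fix j assume j: "j \<in> {j. ?s j > i \<and> u j < u (?s i)}"
    then have j1: "?s j > i" "u j < u i" using si by auto
    have "j \<noteq> i" using j1 si by auto
    moreover have "j \<ge> i"
    proof (rule ccontr)
      assume "\<not> j \<ge> i"
      then have "j + 1 \<le> i" by simp
      then have "?s j = j + 1 \<and> j + 1 = i" using sg_cases[of n a j] assms j1 by auto
      then have "j mod int n = int a mod int n" "i = j + 1" using sg_cases[of n a j] assms by auto
      then have "i mod int n = (int a + 1) mod int n" by (metis mod_add_left_eq)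
      then show False using assms by simp
    qed
    ultimately show "j \<in> {j. j > i \<and> u j < u i}" using j1 by auto
  next
    fix j assume j: "j \<in> {j. j > i \<and> u j < u i}"
    then have j1: "j > i" "u j < u i" by auto
    have "?s j > i"
    proof (rule ccontr)
      assume "\<not> ?s j > i"
      then have "?s j = j - 1 \<and> j = i + 1" using sg_cases[of n a j] assms j1 by auto
      then have "j mod int n = (int a + 1) mod int n" "j = i + 1" using sg_cases[of n a j] assms by auto
      then have "i mod int n = int a mod int n"
        by (metis add_diff_cancel_right' mod_diff_left_eq)
      then show False using assms by simp
    qed
    then show "j \<in> {j. ?s j > i \<and> u j < u (?s i)}" using j1 si by auto
  qed
  then show ?thesis
    unfolding cf_comp_invol[OF inv] using si by (simp add: cf_def)
qed


definition cv :: "(int \<Rightarrow> int) \<Rightarrow> nat \<Rightarrow> nat" where "cv u r = cf u (int r)"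

definition Ninv :: "nat \<Rightarrow> (int \<Rightarrow> int) \<Rightarrow> nat" where "Ninv n u = (\<Sum>r<n. cv u r)"

lemma cf_succ: assumes "per n u" "n > 0" shows "cf u (int a + 1) = cv u (Suc a mod n)"
proof -
  have "cf u (int a + 1) = cf u ((int a + 1) mod int n)" using cf_mod[OF assms] by simp
  also have "(int a + 1) mod int n = int (Suc a mod n)" by (simp add: zmod_int add.commute)
  finally show ?thesis by (simp add: cv_def)
qed

lemma cf_res: assumes "per n u" "n > 0" "r < n" shows "cf u (int r) = cv u r"
  by (simp add: cv_def)

lemma per_sgc: "n > 1 \<Longrightarrow> per n u \<Longrightarrow> per n (u \<circ> s_gen n a)"
  by (simp add: per_comp per_sg)

lemma CA: assumes "n > 2" "per n u" "a < n" "u (int a) < u (int a + 1)"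
  shows "cv (u \<circ> s_gen n a) a = cv u (Suc a mod n) + 1"
    "cv (u \<circ> s_gen n a) (Suc a mod n) = cv u a"
    "\<And>r. r < n \<Longrightarrow> r \<noteq> a \<Longrightarrow> r \<noteq> Suc a mod n \<Longrightarrow> cv (u \<circ> s_gen n a) r = cv u r"
proof -
  have p': "per n (u \<circ> s_gen n a)" using per_sgc assms by auto
  show "cv (u \<circ> s_gen n a) a = cv u (Suc a mod n) + 1"
    using R1[OF assms(1,4,2)] cf_succ[OF assms(2)] assms by (simp add: cv_def)
  show "cv (u \<circ> s_gen n a) (Suc a mod n) = cv u a"
    using R2[OF assms(1,4,2)] cf_succ[OF p'] assms by (simp add: cv_def)
  fix r assume r: "r < n" "r \<noteq> a" "r \<noteq> Suc a mod n"
  have "int r mod int n \<noteq> int a mod int n" using r assms by simp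
  moreover have "int r mod int n \<noteq> (int a + 1) mod int n"
  proof
    assume "int r mod int n = (int a + 1) mod int n"
    then have "int r = int (Suc a mod n)" using r by (simp add: zmod_int add.commute)
    then show False using r by simp
  qed
  ultimately show "cv (u \<circ> s_gen n a) r = cv u r" using R3[OF assms(1)] by (simp add: cv_def)
qed

lemma sg_sg_comp: "n > 1 \<Longrightarrow> (u \<circ> s_gen n a) \<circ> s_gen n a = u"
  by (simp add: comp_assoc sg_comp_self)

lemma CD: assumes "n > 2" "per n u" "a < n" "u (int a) > u (int a + 1)"
  shows "cv (u \<circ> s_gen n a) (Suc a mod n) + 1 = cv u a"
    "cv (u \<circ> s_gen n a) a = cv u (Suc a mod n)"
    "\<And>r. r < n \<Longrightarrow> r \<noteq> a \<Longrightarrow> r \<noteq> Suc a mod n \<Longrightarrow> cv (u \<circ> s_gen n a) r = cv u r"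
proof -
  let ?u = "u \<circ> s_gen n a"
  have p': "per n ?u" using per_sgc assms by auto
  have n1: "n > 1" using assms by simp
  have e: "?u \<circ> s_gen n a = u" by (rule sg_sg_comp[OF n1])
  have asc: "?u (int a) < ?u (int a + 1)" using assms sg_a[of n a] sg_a1[of n a] by simp
  show "cv ?u (Suc a mod n) + 1 = cv u a" using CA(1)[OF assms(1) p' assms(3) asc] unfolding e by linarith
  show "cv ?u a = cv u (Suc a mod n)" using CA(2)[OF assms(1) p' assms(3) asc] unfolding e by linarith
  fix r assume "r < n" "r \<noteq> a" "r \<noteq> Suc a mod n"
  then show "cv ?u r = cv u r" using CA(3)[OF assms(1) p' assms(3) asc] unfolding e by (metis)
qed

lemma sum_two: fixes n :: nat assumes "a < n" "b < n" "a \<noteq> b"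
  shows "(\<Sum>r<n. f r) = f a + f b + (\<Sum>r\<in>{..<n} - {a, b}. f r)"
proof -
  have "(\<Sum>r<n. f r) = f a + (\<Sum>r\<in>{..<n} - {a}. f r)" using assms by (intro sum.remove) auto
  also have "(\<Sum>r\<in>{..<n} - {a}. f r) = f b + (\<Sum>r\<in>{..<n} - {a} - {b}. f r)"
    using assms by (intro sum.remove) auto
  finally show ?thesis by (simp add: Diff_insert2[symmetric] insert_commute add.assoc)
qed

lemma suc_mod_ne: "n > 1 \<Longrightarrow> a < n \<Longrightarrow> Suc a mod n \<noteq> a"
proof -
  assume a: "n > 1" "a < n"
  show ?thesis
  proof (cases "Suc a = n")
    case True then show ?thesis using a by auto
  next
    case False then have "Suc a < n" using a by simp
    then show ?thesis by simp
  qed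
qed

lemma N_asc: assumes "n > 2" "per n u" "a < n" "u (int a) < u (int a + 1)"
  shows "Ninv n (u \<circ> s_gen n a) = Ninv n u + 1"
proof -
  let ?b = "Suc a mod n"
  let ?v = "u \<circ> s_gen n a"
  have b: "?b < n" "a \<noteq> ?b" using assms suc_mod_ne[of n a] by auto
  have e1: "Ninv n ?v = cv ?v a + cv ?v ?b + (\<Sum>r\<in>{..<n} - {a, ?b}. cv ?v r)"
    unfolding Ninv_def by (rule sum_two[OF assms(3) b(1) b(2)])
  have e2: "(\<Sum>r\<in>{..<n} - {a, ?b}. cv ?v r) = (\<Sum>r\<in>{..<n} - {a, ?b}. cv u r)"
    using CA(3)[OF assms] by (intro sum.cong) auto
  have e3: "Ninv n u = cv u a + cv u ?b + (\<Sum>r\<in>{..<n} - {a, ?b}. cv u r)"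
    unfolding Ninv_def by (rule sum_two[OF assms(3) b(1) b(2)])
  have e4: "cv ?v a = cv u ?b + 1" "cv ?v ?b = cv u a" using CA(1,2)[OF assms] by auto
  show ?thesis using e1 e2 e3 e4 by linarith
qed

lemma N_desc: assumes "n > 2" "per n u" "a < n" "u (int a) > u (int a + 1)"
  shows "Ninv n (u \<circ> s_gen n a) + 1 = Ninv n u"
proof -
  let ?u = "u \<circ> s_gen n a"
  have p': "per n ?u" using per_sgc assms by auto
  have n1: "n > 1" using assms by simp
  have e: "?u \<circ> s_gen n a = u" by (rule sg_sg_comp[OF n1])
  have asc: "?u (int a) < ?u (int a + 1)" using assms sg_a[of n a] sg_a1[of n a] by simp
  show ?thesis using N_asc[OF assms(1) p' assms(3) asc] unfolding e by linarith
qed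

lemma per_neq_succ: "per n u \<Longrightarrow> u (int a) \<noteq> u (int a + 1)"
  unfolding per_def by (metis bij_def inj_eq n_not_Suc_n of_nat_Suc of_nat_eq_iff add.commute)

lemma asc_le: assumes "per n u" "n > 0" "u (int a) < u (int a + 1)"
  shows "cf u (int a) \<le> cf u (int a + 1)"
proof -
  have "{j. j > int a \<and> u j < u (int a)} \<subseteq> {j. j > int a + 1 \<and> u j < u (int a + 1)}"
  proof
    fix j assume "j \<in> {j. j > int a \<and> u j < u (int a)}"
    then have "j > int a" "u j < u (int a)" by auto
    moreover have "j \<noteq> int a + 1" using assms(3) calculation by auto
    ultimately show "j \<in> {j. j > int a + 1 \<and> u j < u (int a + 1)}" using assms(3) by auto
  qed
  then show ?thesis unfolding cf_def using cf_finite[OF assms(1,2)] by (intro card_mono) auto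
qed

lemma desc_of_cv: assumes "per n u" "n > 0" "cv u a > cv u (Suc a mod n)"
  shows "u (int a) > u (int a + 1)"
proof -
  have "\<not> u (int a) < u (int a + 1)"
    using asc_le[OF assms(1,2)] assms(3) cf_succ[OF assms(1,2)] by (force simp: cv_def)
  then show ?thesis using per_neq_succ[OF assms(1), of a] by linarith
qed


lemma inv_sg_comp: assumes "n > 1" "bij w" shows "inv (s_gen n a \<circ> w) = inv w \<circ> s_gen n a"
  using o_inv_distrib[OF sg_bij[OF assms(1)] assms(2)] sg_inv_eq[OF assms(1)] by (metis o_inv_distrib assms sg_bij)

lemma N_step: assumes "n > 2" "per n u" "a < n"
  shows "Ninv n (u \<circ> s_gen n a) \<le> Ninv n u + 1"
proof (cases "u (int a) < u (int a + 1)")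
  case True then show ?thesis using N_asc[OF assms] by simp
next
  case False
  then have "u (int a) > u (int a + 1)" using per_neq_succ[OF assms(2), of a] by linarith
  then show ?thesis using N_desc[OF assms] by simp
qed

lemma N_id: "Ninv n (inv id) = 0"
proof -
  have "cf id i = 0" for i unfolding cf_def by simp
  then show ?thesis by (simp add: Ninv_def cv_def)
qed

lemma N_word: assumes "n > 2" "set ws \<subseteq> {..<n}" shows "Ninv n (inv (word_prod n ws)) \<le> length ws"
  using assms(2)
proof (induction ws)
  case Nil
  have "length ([]::nat list) = 0" by simp
  then show ?case unfolding word_prod_Nil using N_id[of n] by (simp only: order_refl)
next
  case (Cons a ws)
  let ?W = "word_prod n ws"
  have pW: "per n ?W" using per_word assms by simp
  then have b: "bij ?W" using per_def by auto
  have e: "inv (word_prod n (a # ws)) = inv ?W \<circ> s_gen n a"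
    unfolding word_prod_Cons using inv_sg_comp[OF _ b] assms by simp
  have "Ninv n (inv ?W \<circ> s_gen n a) \<le> Ninv n (inv ?W) + 1"
    using N_step[OF assms(1) per_inv[OF pW]] Cons.prems by simp
  moreover have "Ninv n (inv ?W) \<le> length ws" using Cons by simp
  moreover have "length (a # ws) = length ws + 1" by simp
  ultimately show ?case unfolding e by linarith
qed

lemma incr_mono: assumes "\<And>i. (u::int\<Rightarrow>int) i < u (i + 1)" shows "u i \<le> u (i + int d)"
proof (induction d)
  case (Suc d)
  have "u (i + int d) < u (i + int d + 1)" by (rule assms)
  moreover have e: "i + int (Suc d) = i + int d + 1" by simp
  ultimately show ?case using Suc unfolding e by linarith
qed simp

lemma incr_bij_succ: assumes "\<And>i. (u::int\<Rightarrow>int) i < u (i + 1)" "surj u" shows "u (i + 1) = u i + 1"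
proof (rule ccontr)
  assume ne: "u (i + 1) \<noteq> u i + 1"
  then have gt: "u (i + 1) > u i + 1" using assms(1)[of i] by linarith
  obtain j where j: "u j = u i + 1" using assms(2) by (metis surjD)
  show False
  proof (cases "j \<le> i")
    case True
    then have "u j \<le> u i" using incr_mono[where u=u, OF assms(1), of j "nat (i - j)"] by simp
    then show False using j by simp
  next
    case False
    then have "u (i + 1) \<le> u j" using incr_mono[where u=u, OF assms(1), of "i + 1" "nat (j - i - 1)"] by simp
    then show False using j gt by simp
  qed
qed

lemma incr_shift: assumes "\<And>i. (u::int\<Rightarrow>int) (i + 1) = u i + 1" shows "u i = u 0 + i"
proof -
  have pos: "u (int d) = u 0 + int d" for d
  proof (induction d)
    case (Suc d)
    have e: "int (Suc d) = int d + 1" by simp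
    show ?case unfolding e using assms[of "int d"] Suc by simp
  qed simp
  have neg: "u (- int d) = u 0 - int d" for d
  proof (induction d)
    case (Suc d)
    have "u (- int (Suc d) + 1) = u (- int (Suc d)) + 1" by (rule assms)
    moreover have "- int (Suc d) + 1 = - int d" by simp
    ultimately show ?case using Suc by simp
  qed simp
  show ?thesis
  proof (cases "i \<ge> 0")
    case True then show ?thesis using pos[of "nat i"] by simp
  next
    case False then show ?thesis using neg[of "nat (-i)"] by simp
  qed
qed

lemma no_desc_id: assumes "n > 2" "affine_perm n w"
  and nd: "\<forall>a<n. \<not> inv w (int a) > inv w (int a + 1)"
  shows "w = id"
proof -
  let ?u = "inv w"
  have pw: "per n w" using affine_per assms by simp
  have pu: "per n ?u" using per_inv[OF pw] .
  have asc: "?u (int a) < ?u (int a + 1)" if "a < n" for a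
    using nd that per_neq_succ[OF pu, of a] by force
  have inc: "?u i < ?u (i + 1)" for i
  proof -
    define a where "a = nat (i mod int n)"
    define t where "t = i div int n"
    have an: "a < n" unfolding a_def using assms(1) by (simp add: nat_less_iff)
    have ia: "i = int a + t * int n" unfolding a_def t_def using assms(1) by simp
    have "?u i = ?u (int a) + t * int n" using per_shift[OF pu] ia by simp
    moreover have "?u (i + 1) = ?u (int a + 1) + t * int n" using per_shift[OF pu, of "int a + 1" t] ia
      by (simp add: algebra_simps)
    ultimately show ?thesis using asc[OF an] by simp
  qed
  have su: "surj ?u" using pu per_def bij_is_surj by blast
  have "?u i = ?u 0 + i" for i using incr_shift incr_bij_succ[OF inc su] by metis
  then have wj: "w j = j - ?u 0" for j
  proof -
    have bw: "bij w" using pw per_def by auto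
    have "?u (w j) = ?u 0 + w j" by fact
    moreover have "?u (w j) = j" using bw by (simp add: bij_is_inj)
    ultimately show ?thesis by simp
  qed
  have "(\<Sum>i\<in>{1..int n}. w i) = (\<Sum>i\<in>{1..int n}. i)" using assms affine_perm_def by auto
  then have "(\<Sum>i\<in>{1..int n}. i - ?u 0) = (\<Sum>i\<in>{1..int n}. i)" using wj by simp
  then have "int n * ?u 0 = 0" by (simp add: sum_subtractf)
  then have "?u 0 = 0" using assms(1) by simp
  then show ?thesis using wj by auto
qed

lemma word_exists: assumes "n > 2" "affine_perm n w"
  shows "\<exists>ws. set ws \<subseteq> {..<n} \<and> word_prod n ws = w \<and> length ws = Ninv n (inv w)"
  using assms(2)
proof (induction "Ninv n (inv w)" arbitrary: w rule: less_induct)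
  case less
  have pw: "per n w" using affine_per less.prems by simp
  have bw: "bij w" using pw per_def by auto
  show ?case
  proof (cases "\<exists>a<n. inv w (int a) > inv w (int a + 1)")
    case True
    then obtain a where a: "a < n" "inv w (int a) > inv w (int a + 1)" by blast
    let ?w = "s_gen n a \<circ> w"
    have aw: "affine_perm n ?w" using affine_sg less.prems assms(1) by simp
    have iw: "inv ?w = inv w \<circ> s_gen n a" using inv_sg_comp[OF _ bw] assms(1) by simp
    have "Ninv n (inv ?w) + 1 = Ninv n (inv w)" unfolding iw using N_desc[OF assms(1) per_inv[OF pw] a(1) a(2)] .
    then obtain ws where ws: "set ws \<subseteq> {..<n}" "word_prod n ws = ?w" "length ws = Ninv n (inv ?w)"
      using less.hyps[OF _ aw] by force
    have "word_prod n (a # ws) = w" using ws(2) sg_comp_self[of n a] assms(1)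
      by (simp add: word_prod_Cons comp_assoc[symmetric])
    then show ?thesis using ws a \<open>Ninv n (inv ?w) + 1 = Ninv n (inv w)\<close>
      by (intro exI[of _ "a # ws"]) auto
  next
    case False
    then have "w = id" using no_desc_id[OF assms(1) less.prems] by auto
    then show ?thesis using N_id by (intro exI[of _ "[]"]) (auto simp: word_prod_Nil)
  qed
qed

lemma len_eq: assumes "n > 2" "affine_perm n w" shows "aff_length n w = Ninv n (inv w)"
proof -
  obtain ws where ws: "set ws \<subseteq> {..<n}" "word_prod n ws = w" "length ws = Ninv n (inv w)"
    using word_exists[OF assms] by blast
  show ?thesis unfolding aff_length_def
  proof (rule Least_equality)
    show "\<exists>ws. length ws = Ninv n (inv w) \<and> set ws \<subseteq> {..<n} \<and> word_prod n ws = w" using ws by blast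
    fix k assume "\<exists>ws. length ws = k \<and> set ws \<subseteq> {..<n} \<and> word_prod n ws = w"
    then obtain vs where "length vs = k" "set vs \<subseteq> {..<n}" "word_prod n vs = w" by blast
    then show "Ninv n (inv w) \<le> k" using N_word[OF assms(1)] by blast
  qed
qed

lemma len_le: assumes "set ws \<subseteq> {..<n}" "word_prod n ws = w" shows "aff_length n w \<le> length ws"
  unfolding aff_length_def using assms by (intro Least_le) blast

lemma affine_wp: "n > 1 \<Longrightarrow> affine_perm n (word_prod n ws)"
  using affine_word[of n id ws] affine_id by simp


lemma affine_bij: "affine_perm n w \<Longrightarrow> bij w" by (simp add: affine_perm_def)

lemma LS: assumes "n > 2" "affine_perm n z" "a < n"
  shows "inv z (int a) < inv z (int a + 1) \<Longrightarrow> aff_length n (s_gen n a \<circ> z) = aff_length n z + 1"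
    and "inv z (int a) > inv z (int a + 1) \<Longrightarrow> aff_length n (s_gen n a \<circ> z) + 1 = aff_length n z"
proof -
  have pz: "per n z" using affine_per assms by simp
  have az: "affine_perm n (s_gen n a \<circ> z)" using affine_sg assms by simp
  have iz: "inv (s_gen n a \<circ> z) = inv z \<circ> s_gen n a" using inv_sg_comp[OF _ affine_bij[OF assms(2)]] assms by simp
  show "inv z (int a) < inv z (int a + 1) \<Longrightarrow> aff_length n (s_gen n a \<circ> z) = aff_length n z + 1"
    using N_asc[OF assms(1) per_inv[OF pz] assms(3)] len_eq[OF assms(1) az] len_eq[OF assms(1,2)] iz by simp
  show "inv z (int a) > inv z (int a + 1) \<Longrightarrow> aff_length n (s_gen n a \<circ> z) + 1 = aff_length n z"
    using N_desc[OF assms(1) per_inv[OF pz] assms(3)] len_eq[OF assms(1) az] len_eq[OF assms(1,2)] iz by simp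
qed

lemma LS_le: assumes "n > 2" "affine_perm n z" "a < n"
  shows "aff_length n (s_gen n a \<circ> z) \<le> aff_length n z + 1"
proof (cases "inv z (int a) < inv z (int a + 1)")
  case True then show ?thesis using LS(1)[OF assms] by simp
next
  case False
  have "inv z (int a) \<noteq> inv z (int a + 1)" using per_neq_succ per_inv affine_per assms(2) by blast
  then show ?thesis using LS(2)[OF assms] False by simp
qed

lemma LW_le: assumes "n > 2" "affine_perm n y" "set ws \<subseteq> {..<n}"
  shows "aff_length n (word_prod n ws \<circ> y) \<le> aff_length n y + length ws"
  using assms(3)
proof (induction ws)
  case Nil then show ?case by (simp add: word_prod_Nil)
next
  case (Cons a ws)
  have a: "affine_perm n (word_prod n ws \<circ> y)" using affine_word assms by simp
  have "aff_length n (s_gen n a \<circ> (word_prod n ws \<circ> y)) \<le> aff_length n (word_prod n ws \<circ> y) + 1"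
    using LS_le[OF assms(1) a] Cons.prems by simp
  moreover have e: "word_prod n (a # ws) \<circ> y = s_gen n a \<circ> (word_prod n ws \<circ> y)"
    by (simp add: word_prod_Cons comp_assoc)
  moreover have "set ws \<subseteq> {..<n}" using Cons.prems by simp
  then have "aff_length n (word_prod n ws \<circ> y) \<le> aff_length n y + length ws" by (rule Cons.IH)
  ultimately show ?case unfolding e length_Cons by linarith
qed

lemma subadd: assumes "n > 2" "affine_perm n x" "affine_perm n y"
  shows "aff_length n (x \<circ> y) \<le> aff_length n x + aff_length n y"
proof -
  obtain ws where ws: "set ws \<subseteq> {..<n}" "word_prod n ws = x" "length ws = Ninv n (inv x)"
    using word_exists[OF assms(1,2)] by blast
  show ?thesis using LW_le[OF assms(1,3) ws(1)] ws len_eq[OF assms(1,2)] by simp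
qed

definition valid :: "nat \<Rightarrow> nat list \<Rightarrow> bool" where
  "valid n ws \<longleftrightarrow> distinct ws \<and> set ws \<subseteq> {..<n} \<and> sorted_wrt (\<lambda>x y. y \<noteq> Suc x mod n) ws"

lemma K: assumes "n > 2" "valid n ws" "affine_perm n y"
  "aff_length n (word_prod n ws \<circ> y) = aff_length n y + length ws"
  shows "\<exists>g f. (\<forall>p<n. cv (inv (word_prod n ws \<circ> y)) p = g p + f p)
     \<and> image_mset g (mset_set {..<n}) = image_mset (cv (inv y)) (mset_set {..<n})
     \<and> (\<forall>p<n. f p \<le> 1) \<and> (\<forall>p<n. f p = 1 \<longrightarrow> p \<in> set ws) \<and> (\<Sum>p<n. f p) = length ws"
  using assms(2,4)
proof (induction ws)
  case Nil
  show ?case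
    by (rule exI[of _ "cv (inv y)"], rule exI[of _ "\<lambda>_. 0"]) (simp add: word_prod_Nil)
next
  case (Cons a r)
  define z where "z = word_prod n r \<circ> y"
  have vr: "valid n r" using Cons.prems(1) by (simp add: valid_def)
  have an: "a < n" using Cons.prems(1) by (simp add: valid_def)
  have anr: "a \<notin> set r" using Cons.prems(1) by (simp add: valid_def)
  have snr: "Suc a mod n \<notin> set r" using Cons.prems(1) by (auto simp: valid_def)
  have az: "affine_perm n z" unfolding z_def using affine_word assms by simp
  have l1: "aff_length n z \<le> aff_length n y + length r"
    unfolding z_def using LW_le[OF assms(1,3)] vr by (simp add: valid_def)
  have l2: "aff_length n (s_gen n a \<circ> z) \<le> aff_length n z + 1" using LS_le[OF assms(1) az an] .
  have eq: "word_prod n (a # r) \<circ> y = s_gen n a \<circ> z" unfolding z_def by (simp add: word_prod_Cons comp_assoc)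
  have p2: "aff_length n (s_gen n a \<circ> z) = aff_length n y + length r + 1"
    using Cons.prems(2) unfolding eq length_Cons by linarith
  have lz: "aff_length n z = aff_length n y + length r" using l1 l2 p2 by linarith
  have lsz: "aff_length n (s_gen n a \<circ> z) = aff_length n z + 1" using l1 l2 p2 by linarith
  obtain g f where gf: "\<forall>p<n. cv (inv z) p = g p + f p"
     "image_mset g (mset_set {..<n}) = image_mset (cv (inv y)) (mset_set {..<n})"
     "\<forall>p<n. f p \<le> 1" "\<forall>p<n. f p = 1 \<longrightarrow> p \<in> set r" "(\<Sum>p<n. f p) = length r"
    using Cons.IH[OF vr lz[unfolded z_def]] unfolding z_def[symmetric] by blast
  let ?u = "inv z"
  have pu: "per n ?u" using per_inv affine_per az by blast
  have asc: "?u (int a) < ?u (int a + 1)"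
  proof (rule ccontr)
    assume "\<not> ?u (int a) < ?u (int a + 1)"
    then have "?u (int a) > ?u (int a + 1)" using per_neq_succ[OF pu, of a] by linarith
    then show False using LS(2)[OF assms(1) az an] lsz by simp
  qed
  have iz: "inv (s_gen n a \<circ> z) = ?u \<circ> s_gen n a" using inv_sg_comp[OF _ affine_bij[OF az]] assms by simp
  let ?b = "Suc a mod n"
  have bn: "?b < n" using assms by simp
  have ab: "a \<noteq> ?b" using suc_mod_ne[of n a] assms an by simp
  have fa: "f a = 0" using gf(3,4) anr an by (metis le_neq_implies_less less_one)
  have fb: "f ?b = 0" using gf(3,4) snr bn by (metis le_neq_implies_less less_one)
  define g' where "g' = (\<lambda>p. if p = a then g ?b else if p = ?b then g a else g p)"
  define f' where "f' = f(a := 1)"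
  show ?case
  proof (rule exI[of _ g'], rule exI[of _ f'], intro conjI allI impI)
    fix p assume p: "p < n"
    show "cv (inv (word_prod n (a # r) \<circ> y)) p = g' p + f' p"
    proof -
      have "cv (inv (word_prod n (a # r) \<circ> y)) p = cv (?u \<circ> s_gen n a) p" unfolding eq iz ..
      also have "\<dots> = g' p + f' p"
      proof (cases "p = a")
        case True then show ?thesis using CA(1)[OF assms(1) pu an asc] gf(1) bn fb
          unfolding g'_def f'_def by simp
      next
        case False
        show ?thesis
        proof (cases "p = ?b")
          case True then show ?thesis using CA(2)[OF assms(1) pu an asc] gf(1) an fa fb ab False
            unfolding g'_def f'_def by simp
        next
          case F2: False then show ?thesis using CA(3)[OF assms(1) pu an asc p False F2] gf(1) p False
            unfolding g'_def f'_def by simp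
        qed
      qed
      finally show ?thesis .
    qed
  next
    have A: "mset_set {..<n} = {#a, ?b#} + mset_set ({..<n} - {a, ?b})"
    proof -
      have "{..<n} = {a, ?b} \<union> ({..<n} - {a, ?b})" using an bn by auto
      then have "mset_set {..<n} = mset_set {a, ?b} + mset_set ({..<n} - {a, ?b})"
        by (metis Diff_disjoint finite_Diff finite_insert finite_lessThan finite.emptyI mset_set_Union)
      then show ?thesis using ab by simp
    qed
    have "image_mset g' (mset_set ({..<n} - {a, ?b})) = image_mset g (mset_set ({..<n} - {a, ?b}))"
      by (rule image_mset_cong) (auto simp: g'_def)
    moreover have "g' a = g ?b" "g' ?b = g a" using ab by (auto simp: g'_def)
    ultimately have "image_mset g' (mset_set {..<n}) = image_mset g (mset_set {..<n})"
      unfolding A by (simp add: add_mset_commute)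
    then show "image_mset g' (mset_set {..<n}) = image_mset (cv (inv y)) (mset_set {..<n})" using gf(2) by simp
  next
    fix p assume "p < n" then show "f' p \<le> 1" using gf(3) by (simp add: f'_def)
  next
    fix p assume "p < n" "f' p = 1" then show "p \<in> set (a # r)" using gf(4) by (auto simp: f'_def split: if_splits)
  next
    have "(\<Sum>p<n. f' p) = f' a + (\<Sum>p\<in>{..<n} - {a}. f' p)" using an by (intro sum.remove) auto
    also have "(\<Sum>p\<in>{..<n} - {a}. f' p) = (\<Sum>p\<in>{..<n} - {a}. f p)" by (intro sum.cong) (auto simp: f'_def)
    also have "(\<Sum>p<n. f p) = f a + (\<Sum>p\<in>{..<n} - {a}. f p)" using an by (intro sum.remove) auto
    ultimately show "(\<Sum>p<n. f' p) = length (a # r)" using gf(5) fa by (simp add: f'_def)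
  qed
qed


definition prr :: "nat \<Rightarrow> nat \<Rightarrow> nat" where "prr n p = (p + n - 1) mod n"

lemma prr_facts: assumes "n > 1" "p < n"
  shows "prr n p < n" "prr n (Suc p mod n) = p" "Suc (prr n p) mod n = p" "prr n p \<noteq> p"
proof -
  show "prr n p < n" unfolding prr_def using assms by simp
  show "prr n (Suc p mod n) = p"
  proof (cases "Suc p = n")
    case True then show ?thesis unfolding prr_def using assms by simp
  next
    case False then have "Suc p < n" using assms by simp
    have "Suc p + n - 1 = p + n" by simp
    then have "(Suc p + n - 1) mod n = p" using assms by simp
    then show ?thesis unfolding prr_def using \<open>Suc p < n\<close> by simp
  qed
  show "Suc (prr n p) mod n = p"
  proof (cases "p = 0")
    case True then show ?thesis unfolding prr_def using assms by simp
  next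
    case False
    have e: "p + n - 1 = (p - 1) + n" using False by simp
    have "p - 1 < n" using assms by simp
    then have "(p + n - 1) mod n = p - 1" unfolding e by simp
    then show ?thesis unfolding prr_def using False assms by simp
  qed
  show "prr n p \<noteq> p"
  proof
    assume "prr n p = p"
    then have "Suc p mod n = p" using \<open>Suc (prr n p) mod n = p\<close> by simp
    then show False using suc_mod_ne assms by blast
  qed
qed

lemma foldl_sg: "foldl (\<lambda>x a. s_gen n a \<circ> x) w (xs @ [k]) = s_gen n k \<circ> foldl (\<lambda>x a. s_gen n a \<circ> x) w xs"
  by simp

lemma peel_gen: assumes "n > 2" "affine_perm n w" "valid n (pre @ rest)"
  "set (pre @ rest) = {p. p < n \<and> cv (inv w) p > 0}"
  shows "affine_perm n (foldl (\<lambda>x a. s_gen n a \<circ> x) w pre)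
    \<and> aff_length n (foldl (\<lambda>x a. s_gen n a \<circ> x) w pre) + length pre = aff_length n w
    \<and> (\<forall>p<n. cv (inv (foldl (\<lambda>x a. s_gen n a \<circ> x) w pre)) p =
          (if prr n p \<in> set pre then cv (inv w) (prr n p) - 1 else if p \<in> set pre then 0 else cv (inv w) p))"
  using assms(3,4)
proof (induction pre arbitrary: rest rule: rev_induct)
  case Nil then show ?case using assms by simp
next
  case (snoc k pre)
  let ?c = "cv (inv w)"
  let ?D = "{p. p < n \<and> cv (inv w) p > 0}"
  define x where "x = foldl (\<lambda>x a. s_gen n a \<circ> x) w pre"
  have v: "valid n (pre @ (k # rest))" using snoc.prems(1) by simp
  have sD: "set (pre @ (k # rest)) = ?D" using snoc.prems(2) by simp
  have IH: "affine_perm n x \<and> aff_length n x + length pre = aff_length n w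
    \<and> (\<forall>p<n. cv (inv x) p = (if prr n p \<in> set pre then ?c (prr n p) - 1 else if p \<in> set pre then 0 else ?c p))"
    unfolding x_def by (rule snoc.IH[OF v sD])
  have n1: "n > 1" using assms by simp
  have kn: "k < n" using v by (simp add: valid_def)
  have kpre: "k \<notin> set pre" using v by (simp add: valid_def)
  have sw: "\<forall>a\<in>set pre. \<forall>b\<in>set (k # rest). b \<noteq> Suc a mod n" "\<forall>b\<in>set rest. b \<noteq> Suc k mod n"
    using v by (auto simp: valid_def sorted_wrt_append)
  have dk: "rest \<noteq> [] \<longrightarrow> True" by simp
  have prk: "prr n k \<notin> set pre"
  proof
    assume "prr n k \<in> set pre"
    then have "k \<noteq> Suc (prr n k) mod n" using sw(1) by auto
    then show False using prr_facts[OF n1 kn] by simp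
  qed
  have skD: "Suc k mod n \<in> ?D \<Longrightarrow> Suc k mod n \<in> set pre"
  proof -
    assume "Suc k mod n \<in> ?D"
    then have "Suc k mod n \<in> set (pre @ (k # rest))" using sD by simp
    moreover have "Suc k mod n \<noteq> k" using suc_mod_ne[OF n1 kn] .
    ultimately show ?thesis using sw(2) by auto
  qed
  have kD: "k \<in> ?D" using sD by (metis Un_iff insert_iff list.simps(15) set_append)
  let ?u = "inv x"
  have ax: "affine_perm n x" using IH by simp
  have pu: "per n ?u" using per_inv affine_per ax by blast
  have ck: "cv ?u k = ?c k" using IH kn prk kpre by simp
  have ck0: "?c k > 0" using kD by simp
  have csk: "cv ?u (Suc k mod n) = 0"
  proof -
    have a1: "prr n (Suc k mod n) = k" using prr_facts[OF n1 kn] by simp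
    show ?thesis
    proof (cases "Suc k mod n \<in> set pre")
      case True then show ?thesis using IH a1 kpre n1 by simp
    next
      case False
      then have "Suc k mod n \<notin> ?D" using skD by blast
      then have "?c (Suc k mod n) = 0" using n1 by simp
      then show ?thesis using IH a1 kpre False n1 by simp
    qed
  qed
  have desc: "?u (int k) > ?u (int k + 1)"
    using desc_of_cv[OF pu] ck ck0 csk assms(1) by simp
  have ix: "inv (s_gen n k \<circ> x) = ?u \<circ> s_gen n k" using inv_sg_comp[OF n1 affine_bij[OF ax]] .
  have fx: "foldl (\<lambda>x a. s_gen n a \<circ> x) w (pre @ [k]) = s_gen n k \<circ> x" unfolding x_def by simp
  have l: "aff_length n (s_gen n k \<circ> x) + 1 = aff_length n x"
    using LS(2)[OF assms(1) ax kn] desc by simp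
  have cd: "cv (?u \<circ> s_gen n k) (Suc k mod n) + 1 = cv ?u k"
           "cv (?u \<circ> s_gen n k) k = cv ?u (Suc k mod n)"
           "\<And>r. r < n \<Longrightarrow> r \<noteq> k \<Longrightarrow> r \<noteq> Suc k mod n \<Longrightarrow> cv (?u \<circ> s_gen n k) r = cv ?u r"
    using CD[OF assms(1) pu kn desc] by auto
  have code: "cv (inv (s_gen n k \<circ> x)) p =
      (if prr n p \<in> set (pre @ [k]) then ?c (prr n p) - 1 else if p \<in> set (pre @ [k]) then 0 else ?c p)"
    if p: "p < n" for p
  proof -
    have "cv (inv (s_gen n k \<circ> x)) p = cv (?u \<circ> s_gen n k) p" unfolding ix ..
    also have "\<dots> = (if prr n p \<in> set (pre @ [k]) then ?c (prr n p) - 1 else if p \<in> set (pre @ [k]) then 0 else ?c p)"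
    proof (cases "p = k")
      case True
      have "prr n k \<noteq> k" using prr_facts[OF n1 kn] by simp
      then show ?thesis using True cd(2) csk prk by simp
    next
      case False
      show ?thesis
      proof (cases "p = Suc k mod n")
        case True
        have "prr n p = k" using True prr_facts[OF n1 kn] by simp
        then show ?thesis using True cd(1) ck by simp
      next
        case F2: False
        have "prr n p \<noteq> k"
        proof
          assume "prr n p = k"
          then have "Suc (prr n p) mod n = Suc k mod n" by simp
          then show False using prr_facts[OF n1 p] F2 by simp
        qed
        then show ?thesis using cd(3)[OF p False F2] IH p False by simp
      qed
    qed
    finally show ?thesis .
  qed
  show ?case unfolding fx
  proof (intro conjI)
    show "affine_perm n (s_gen n k \<circ> x)" by (rule affine_sg[OF n1 ax])
    have "length (pre @ [k]) = length pre + 1" by simp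
    then show "aff_length n (s_gen n k \<circ> x) + length (pre @ [k]) = aff_length n w" using l IH by linarith
    show "\<forall>p<n. cv (inv (s_gen n k \<circ> x)) p =
      (if prr n p \<in> set (pre @ [k]) then ?c (prr n p) - 1 else if p \<in> set (pre @ [k]) then 0 else ?c p)"
      using code by blast
  qed
qed


lemma foldl_wp: "n > 1 \<Longrightarrow> word_prod n ws \<circ> foldl (\<lambda>x a. s_gen n a \<circ> x) w ws = w"
proof (induction ws arbitrary: w)
  case Nil then show ?case by (simp add: word_prod_Nil)
next
  case (Cons a ws)
  have "word_prod n (a # ws) \<circ> foldl (\<lambda>x a. s_gen n a \<circ> x) w (a # ws)
      = s_gen n a \<circ> (word_prod n ws \<circ> foldl (\<lambda>x a. s_gen n a \<circ> x) (s_gen n a \<circ> w) ws)"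
    by (simp add: word_prod_Cons comp_assoc)
  also have "\<dots> = s_gen n a \<circ> (s_gen n a \<circ> w)" using Cons.IH[OF Cons.prems, of "s_gen n a \<circ> w"] by (simp only:)
  also have "\<dots> = w" using sg_comp_self[OF Cons.prems] by (simp add: comp_assoc[symmetric])
  finally show ?case .
qed

lemma peel: assumes "n > 2" "affine_perm n w" "valid n ws"
  "set ws = {p. p < n \<and> cv (inv w) p > 0}"
  shows "affine_perm n (foldl (\<lambda>x a. s_gen n a \<circ> x) w ws)
    \<and> word_prod n ws \<circ> foldl (\<lambda>x a. s_gen n a \<circ> x) w ws = w
    \<and> aff_length n (foldl (\<lambda>x a. s_gen n a \<circ> x) w ws) + length ws = aff_length n w
    \<and> (\<forall>p<n. cv (inv (foldl (\<lambda>x a. s_gen n a \<circ> x) w ws)) p = cv (inv w) (prr n p) - 1)"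
proof -
  have G: "affine_perm n (foldl (\<lambda>x a. s_gen n a \<circ> x) w ws)
    \<and> aff_length n (foldl (\<lambda>x a. s_gen n a \<circ> x) w ws) + length ws = aff_length n w
    \<and> (\<forall>p<n. cv (inv (foldl (\<lambda>x a. s_gen n a \<circ> x) w ws)) p =
          (if prr n p \<in> set ws then cv (inv w) (prr n p) - 1 else if p \<in> set ws then 0 else cv (inv w) p))"
    using peel_gen[OF assms(1,2), of ws "[]"] assms(3,4) by simp
  have n1: "n > 1" using assms by simp
  have "\<forall>p<n. cv (inv (foldl (\<lambda>x a. s_gen n a \<circ> x) w ws)) p = cv (inv w) (prr n p) - 1"
  proof (intro allI impI)
    fix p assume p: "p < n"
    have pp: "prr n p < n" using prr_facts[OF n1 p] by simp
    show "cv (inv (foldl (\<lambda>x a. s_gen n a \<circ> x) w ws)) p = cv (inv w) (prr n p) - 1"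
      using G p pp assms(4) by auto
  qed
  then show ?thesis using G foldl_wp[OF n1] by blast
qed

lemma prr_inj: assumes "n > 1" shows "inj_on (prr n) {..<n}"
proof
  fix p q assume pq: "p \<in> {..<n}" "q \<in> {..<n}" "prr n p = prr n q"
  have "p = Suc (prr n p) mod n" using prr_facts(3)[OF assms, of p] pq(1) by simp
  also have "\<dots> = Suc (prr n q) mod n" using pq(3) by simp
  also have "\<dots> = q" using prr_facts(3)[OF assms, of q] pq(2) by simp
  finally show "p = q" .
qed

lemma prr_image: assumes "n > 1" shows "prr n ` {..<n} = {..<n}"
proof
  show "prr n ` {..<n} \<subseteq> {..<n}"
  proof
    fix x assume "x \<in> prr n ` {..<n}"
    then obtain p where "p < n" "x = prr n p" by auto
    then show "x \<in> {..<n}" using prr_facts(1)[OF assms] by simp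
  qed
  show "{..<n} \<subseteq> prr n ` {..<n}"
  proof
    fix p assume "p \<in> {..<n}"
    then have "prr n (Suc p mod n) = p" using prr_facts(2)[OF assms] by simp
    moreover have "Suc p mod n \<in> {..<n}" using assms by simp
    ultimately show "p \<in> prr n ` {..<n}" by (intro image_eqI[where x="Suc p mod n"]) simp_all
  qed
qed

lemma mset_prr: assumes "n > 1"
  shows "image_mset (\<lambda>p. c (prr n p)) (mset_set {..<n}) = image_mset c (mset_set {..<n})"
proof -
  have "image_mset (\<lambda>p. c (prr n p)) (mset_set {..<n}) = image_mset c (image_mset (prr n) (mset_set {..<n}))"
    by (simp add: image_mset.compositionality comp_def)
  also have "image_mset (prr n) (mset_set {..<n}) = mset_set (prr n ` {..<n})"
    using image_mset_mset_set[OF prr_inj[OF assms]] by simp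
  finally show ?thesis using prr_image[OF assms] by simp
qed


lemma sg_res: assumes "n > 1" "a < n"
  shows "s_gen n a j = (if j mod int n = int a then j + 1 else if j mod int n = int (Suc a mod n) then j - 1 else j)"
proof -
  have e1: "int a mod int n = int a" using assms by simp
  have e2: "(int a + 1) mod int n = int (Suc a mod n)" by (simp add: zmod_int add.commute)
  show ?thesis using sg_cases[OF assms(1), of a j] e1 e2 suc_mod_ne[OF assms] by auto
qed

lemma res_succ: assumes "n > 0" "j mod int n = int a" shows "(j + 1) mod int n = int (Suc a mod n)"
proof -
  have "(j + 1) mod int n = (j mod int n + 1) mod int n" by (simp add: mod_add_left_eq)
  then show ?thesis using assms by (simp add: zmod_int add.commute)
qed

lemma res_pred: assumes "n > 0" "a < n" "j mod int n = int (Suc a mod n)" shows "(j - 1) mod int n = int a"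
proof -
  have "(j - 1) mod int n = (j mod int n - 1) mod int n" by (simp add: mod_diff_left_eq)
  also have "\<dots> = (int (Suc a) mod int n - 1) mod int n" using assms by (simp add: zmod_int)
  also have "\<dots> = (int (Suc a) - 1) mod int n" by (simp add: mod_diff_left_eq)
  also have "\<dots> = int a" using assms by simp
  finally show ?thesis .
qed

lemma suc_mod_inj: "a < n \<Longrightarrow> b < n \<Longrightarrow> Suc a mod n = Suc b mod n \<Longrightarrow> a = b"
  by (metis Suc_lessI mod_Suc mod_less nat.inject mod_self less_not_refl zero_neq_one Suc_inject old.nat.distinct(1) mod_Suc_eq)

lemma comm_half: assumes "n > 2" "a < n" "b < n" "a \<noteq> b" "b \<noteq> Suc a mod n" "a \<noteq> Suc b mod n"
  "j mod int n = int a \<or> j mod int n = int (Suc a mod n)"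
  shows "s_gen n a (s_gen n b j) = s_gen n b (s_gen n a j)"
proof -
  have n1: "n > 1" "n > 0" using assms by auto
  have sab: "Suc a mod n \<noteq> Suc b mod n" using suc_mod_inj assms by blast
  have fixb: "s_gen n b i = i" if "i mod int n = int a \<or> i mod int n = int (Suc a mod n)" for i
  proof -
    have "i mod int n \<noteq> int b" using that assms by auto
    moreover have "i mod int n \<noteq> int (Suc b mod n)" using that assms sab by auto
    ultimately show ?thesis using sg_res[OF n1(1) assms(3)] by simp
  qed
  consider "j mod int n = int a" | "j mod int n = int (Suc a mod n)" using assms by blast
  then show ?thesis
  proof cases
    case 1
    have "s_gen n a j = j + 1" using sg_res[OF n1(1) assms(2)] 1 by simp
    moreover have "(j + 1) mod int n = int (Suc a mod n)" using res_succ[OF n1(2) 1] .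
    ultimately show ?thesis using fixb 1 by simp
  next
    case 2
    have ne: "j mod int n \<noteq> int a" using 2 suc_mod_ne[OF n1(1) assms(2)] by simp
    have "s_gen n a j = j - 1" using sg_res[OF n1(1) assms(2)] 2 ne by simp
    moreover have "(j - 1) mod int n = int a" using res_pred[OF n1(2) assms(2) 2] .
    ultimately show ?thesis using fixb 2 by simp
  qed
qed

lemma sg_commute: assumes "n > 2" "a < n" "b < n" "a \<noteq> b" "b \<noteq> Suc a mod n" "a \<noteq> Suc b mod n"
  shows "s_gen n a \<circ> s_gen n b = s_gen n b \<circ> s_gen n a"
proof
  fix j
  have n1: "n > 1" using assms by simp
  show "(s_gen n a \<circ> s_gen n b) j = (s_gen n b \<circ> s_gen n a) j"
  proof (cases "j mod int n = int a \<or> j mod int n = int (Suc a mod n)")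
    case True then show ?thesis using comm_half[OF assms True] by simp
  next
    case F1: False
    show ?thesis
    proof (cases "j mod int n = int b \<or> j mod int n = int (Suc b mod n)")
      case True then show ?thesis using comm_half[OF assms(1,3,2) assms(4)[symmetric] assms(6,5) True] by simp
    next
      case False
      then show ?thesis using F1 sg_res[OF n1 assms(2), of j] sg_res[OF n1 assms(3), of j] by simp
    qed
  qed
qed

lemma commute_through: assumes "\<forall>b\<in>set p. s_gen n a \<circ> s_gen n b = s_gen n b \<circ> s_gen n a"
  shows "word_prod n p \<circ> s_gen n a = s_gen n a \<circ> word_prod n p"
  using assms
proof (induction p)
  case Nil then show ?case by (simp add: word_prod_Nil)
next
  case (Cons b p)
  have ih: "word_prod n p \<circ> s_gen n a = s_gen n a \<circ> word_prod n p"
    using Cons.prems by (intro Cons.IH) simp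
  have cb: "s_gen n a \<circ> s_gen n b = s_gen n b \<circ> s_gen n a" using Cons.prems by (simp add: comp_def)
  have "word_prod n (b # p) \<circ> s_gen n a = s_gen n b \<circ> (word_prod n p \<circ> s_gen n a)"
    by (simp add: word_prod_Cons comp_assoc)
  also have "\<dots> = s_gen n b \<circ> (s_gen n a \<circ> word_prod n p)" by (simp only: ih)
  also have "\<dots> = (s_gen n b \<circ> s_gen n a) \<circ> word_prod n p" by (simp add: comp_assoc)
  also have "\<dots> = (s_gen n a \<circ> s_gen n b) \<circ> word_prod n p" by (simp only: cb)
  also have "\<dots> = s_gen n a \<circ> word_prod n (b # p)" by (simp add: word_prod_Cons comp_assoc)
  finally show ?case .
qed

lemma valid_sub: "valid n (p @ a # q) \<Longrightarrow> valid n (p @ q)"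
  by (auto simp: valid_def sorted_wrt_append)

lemma set_determines: assumes "n > 2" "valid n ws1" "valid n ws2" "set ws1 = set ws2"
  shows "word_prod n ws1 = word_prod n ws2"
  using assms(2-4)
proof (induction ws1 arbitrary: ws2)
  case Nil then show ?case by simp
next
  case (Cons a r)
  have "a \<in> set ws2" using Cons.prems by auto
  then obtain p q where ws2: "ws2 = p @ a # q" by (meson split_list)
  have an: "a < n" using Cons.prems by (simp add: valid_def)
  have dist2: "distinct ws2" using Cons.prems by (simp add: valid_def)
  have sa: "Suc a mod n \<notin> set (a # r)"
  proof -
    have "Suc a mod n \<notin> set r" using Cons.prems(1) by (auto simp: valid_def)
    moreover have "Suc a mod n \<noteq> a" using suc_mod_ne an assms by simp
    ultimately show ?thesis by simp
  qed
  have comm: "\<forall>b\<in>set p. s_gen n a \<circ> s_gen n b = s_gen n b \<circ> s_gen n a"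
  proof
    fix b assume b: "b \<in> set p"
    have bn: "b < n" using b Cons.prems(2) ws2 by (auto simp: valid_def)
    have "b \<noteq> a" using dist2 b ws2 by auto
    moreover have "b \<noteq> Suc a mod n" using sa b ws2 Cons.prems(3) by auto
    moreover have "a \<noteq> Suc b mod n" using Cons.prems(2) b ws2 by (auto simp: valid_def sorted_wrt_append)
    ultimately show "s_gen n a \<circ> s_gen n b = s_gen n b \<circ> s_gen n a"
      using sg_commute[OF assms(1) an bn] by simp
  qed
  have "word_prod n ws2 = word_prod n p \<circ> s_gen n a \<circ> word_prod n q"
    unfolding ws2 by (simp add: word_prod_append word_prod_Cons comp_assoc)
  also have "\<dots> = s_gen n a \<circ> word_prod n (p @ q)"
    using commute_through[OF comm] by (simp add: word_prod_append comp_assoc)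
  finally have e: "word_prod n ws2 = s_gen n a \<circ> word_prod n (p @ q)" .
  have vr: "valid n r" using Cons.prems(1) by (simp add: valid_def)
  have vpq: "valid n (p @ q)" using valid_sub Cons.prems(2) ws2 by blast
  have "set r = set (p @ q)"
  proof -
    have "a \<notin> set r" using Cons.prems(1) by (simp add: valid_def)
    moreover have "a \<notin> set (p @ q)" using dist2 ws2 by auto
    ultimately show ?thesis using Cons.prems(3) ws2 by auto
  qed
  then have "word_prod n r = word_prod n (p @ q)" using Cons.IH[OF vr vpq] by simp
  then show ?case using e by (simp add: word_prod_Cons)
qed


definition cfun :: "nat \<Rightarrow> nat \<Rightarrow> nat \<Rightarrow> nat" where
  "cfun n z t = (if t \<le> z then z - t else z + n - t)"

definition canon :: "nat \<Rightarrow> nat \<Rightarrow> nat set \<Rightarrow> nat list" where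
  "canon n z D = filter (\<lambda>a. a \<in> D) (map (cfun n z) [1..<n])"

lemma cfun_range: "z < n \<Longrightarrow> t \<in> {1..<n} \<Longrightarrow> cfun n z t < n \<and> cfun n z t \<noteq> z"
  unfolding cfun_def by auto

lemma cfun_inj: "z < n \<Longrightarrow> inj_on (cfun n z) {1..<n}"
  unfolding cfun_def by (rule inj_onI) (auto split: if_splits)

lemma cfun_onto: assumes "z < n" "d < n" "d \<noteq> z" shows "d \<in> cfun n z ` {1..<n}"
proof (cases "d < z")
  case True
  have "cfun n z (z - d) = d" "z - d \<in> {1..<n}" unfolding cfun_def using True assms by auto
  then show ?thesis by (metis image_eqI)
next
  case False
  then have dz: "d > z" using assms by simp
  have "cfun n z (z + n - d) = d" "z + n - d \<in> {1..<n}" unfolding cfun_def using dz assms by auto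
  then show ?thesis by (metis image_eqI)
qed

lemma cfun_sorted: assumes "z < n" "t1 \<in> {1..<n}" "t2 \<in> {1..<n}" "t1 < t2"
  shows "cfun n z t2 \<noteq> Suc (cfun n z t1) mod n"
proof (cases "t1 \<le> z")
  case True
  then have x: "cfun n z t1 = z - t1" unfolding cfun_def by simp
  have sx: "Suc (z - t1) mod n = Suc (z - t1)" using True assms by simp
  show ?thesis
  proof (cases "t2 \<le> z")
    case True then show ?thesis unfolding x sx unfolding cfun_def using assms by auto
  next
    case False then show ?thesis unfolding x sx unfolding cfun_def using assms True by auto
  qed
next
  case False
  then have t2: "\<not> t2 \<le> z" using assms by simp
  have x: "cfun n z t1 = z + n - t1" "cfun n z t2 = z + n - t2" unfolding cfun_def using False t2 by auto
  show ?thesis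
  proof (cases "Suc (z + n - t1) = n")
    case True then show ?thesis unfolding x using assms t2 by auto
  next
    case F: False
    then have "Suc (z + n - t1) mod n = Suc (z + n - t1)" using assms False by simp
    then show ?thesis unfolding x using assms by auto
  qed
qed

lemma canon_valid: assumes "z < n" "D \<subseteq> {..<n}" "z \<notin> D"
  shows "valid n (canon n z D) \<and> set (canon n z D) = D"
proof -
  have d: "distinct (map (cfun n z) [1..<n])" using cfun_inj[OF assms(1)] by (simp add: distinct_map)
  have s: "set (map (cfun n z) [1..<n]) \<subseteq> {..<n}" using cfun_range[OF assms(1)] by auto
  have so: "sorted_wrt (\<lambda>x y. y \<noteq> Suc x mod n) (map (cfun n z) [1..<n])"
    unfolding sorted_wrt_map
    by (rule sorted_wrt_mono_rel[OF _ sorted_wrt_upt]) (use cfun_sorted[OF assms(1)] in auto)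
  have st: "set (canon n z D) = D"
  proof
    show "set (canon n z D) \<subseteq> D" unfolding canon_def by auto
    show "D \<subseteq> set (canon n z D)"
    proof
      fix d assume "d \<in> D"
      then have "d < n" "d \<noteq> z" using assms by auto
      then have "d \<in> set (map (cfun n z) [1..<n])" using cfun_onto[OF assms(1)] by auto
      then show "d \<in> set (canon n z D)" unfolding canon_def using \<open>d \<in> D\<close> by auto
    qed
  qed
  have "valid n (canon n z D)" unfolding valid_def canon_def
    using d s so by (auto simp: sorted_wrt_filter)
  then show ?thesis using st by simp
qed

lemma zero_code: assumes "n > 0" "per n u" shows "\<exists>z<n. cv u z = 0"
proof -
  obtain i0 where i0: "i0 \<in> {1..int n}" "\<forall>i\<in>{1..int n}. u i0 \<le> u i"
  proof -
    have "finite (u ` {1..int n})" "u ` {1..int n} \<noteq> {}" using assms by auto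
    then obtain m where "m \<in> u ` {1..int n}" "\<forall>x\<in>u ` {1..int n}. m \<le> x"
      by (metis Min_in Min_le)
    then show ?thesis using that by auto
  qed
  have E: "{j. j > i0 \<and> u j < u i0} = {}"
  proof (rule ccontr)
    assume "{j. j > i0 \<and> u j < u i0} \<noteq> {}"
    then obtain j where j: "j > i0" "u j < u i0" by auto
    define r where "r = (j - 1) mod int n + 1"
    define t where "t = (j - 1) div int n"
    have jr: "j = r + t * int n" unfolding r_def t_def by (simp add: algebra_simps)
    have rW: "r \<in> {1..int n}" unfolding r_def using assms(1) by (simp add: pos_mod_bound pos_mod_sign add1_zle_eq)
    have "t \<ge> 0" unfolding t_def using j i0 assms(1) by (simp add: pos_imp_zdiv_nonneg_iff)
    then have "t * int n \<ge> 0" by simp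
    have "u j = u r + t * int n" using per_shift[OF assms(2)] jr by simp
    then have "u j \<ge> u i0" using i0(2) rW \<open>t * int n \<ge> 0\<close> by fastforce
    then show False using j by simp
  qed
  have c0: "cf u i0 = 0" unfolding cf_def E by simp
  define z where "z = nat (i0 mod int n)"
  have zn: "z < n" unfolding z_def using assms(1) by (simp add: nat_less_iff)
  have "cf u i0 = cf u (i0 mod int n)" using cf_mod[OF assms(2,1)] .
  then have "cv u z = 0" unfolding cv_def z_def using c0 assms(1) by simp
  then show ?thesis using zn by blast
qed


definition LM :: "nat multiset \<Rightarrow> nat list" where
  "LM M = map (\<lambda>j. size (filter_mset (\<lambda>x. j \<le> x) M)) [1..<Suc (Max (insert 0 (set_mset M)))]"

lemma foldr_max: "foldr max ys (0::nat) = Max (insert 0 (set ys))"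
proof (induction ys)
  case Nil then show ?case by simp
next
  case (Cons a ys)
  have i: "insert 0 (set (a # ys)) = insert a (insert 0 (set ys))" by auto
  have "Max (insert a (insert 0 (set ys))) = max a (Max (insert 0 (set ys)))"
    by (rule Max_insert) auto
  then show ?case unfolding i using Cons by (simp only: foldr.simps comp_def)
qed

lemma Max0_ge: "x \<in># M \<Longrightarrow> x \<le> Max (insert (0::nat) (set_mset M))"
  by simp

lemma Max0_in: "Max (insert (0::nat) (set_mset M)) > 0 \<Longrightarrow> Max (insert 0 (set_mset M)) \<in># M"
proof -
  assume a: "Max (insert (0::nat) (set_mset M)) > 0"
  have "Max (insert (0::nat) (set_mset M)) \<in> insert 0 (set_mset M)" by (rule Max_in) auto
  then show ?thesis using a by auto
qed

lemma conj_rev_sort: "conj_part (rev (sort xs)) = LM (mset xs)"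
proof -
  have "length (filter P (rev (sort xs))) = size (filter_mset P (mset xs))" for P
  proof -
    have "size (mset (filter P (rev (sort xs)))) = size (filter_mset P (mset xs))" by simp
    then show ?thesis by (simp only: size_mset)
  qed
  moreover have "foldr max (rev (sort xs)) 0 = Max (insert 0 (set_mset (mset xs)))"
    by (simp add: foldr_max)
  ultimately show ?thesis unfolding conj_part_def LM_def by simp
qed

lemma code_mset: assumes "per n u" "n > 0"
  shows "mset (aff_code n u) = image_mset (cv u) (mset_set {..<n})"
proof -
  have "aff_code n u = map (cf u) [1..int n]" unfolding aff_code_def cf_def by simp
  then have "mset (aff_code n u) = image_mset (cf u) (mset_set {1..int n})"
    by (simp add: mset_set_set[symmetric])
  also have "image_mset (cf u) (mset_set {1..int n}) = image_mset (\<lambda>i. cf u (i mod int n)) (mset_set {1..int n})"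
    using cf_mod[OF assms] by (intro image_mset_cong) auto
  also have "\<dots> = image_mset (cf u) (image_mset (\<lambda>i. i mod int n) (mset_set {1..int n}))"
    by (simp add: image_mset.compositionality comp_def)
  also have "image_mset (\<lambda>i. i mod int n) (mset_set {1..int n}) = mset_set ((\<lambda>i. i mod int n) ` {1..int n})"
  proof (rule image_mset_mset_set)
    show "inj_on (\<lambda>i. i mod int n) {1..int n}"
    proof (rule inj_onI)
      fix x y assume "x \<in> {1..int n}" "y \<in> {1..int n}" "x mod int n = y mod int n"
      then show "x = y"
        by (cases "x = int n"; cases "y = int n") (auto simp: zmod_trivial_iff)
    qed
  qed
  also have "(\<lambda>i. i mod int n) ` {1..int n} = int ` {..<n}"
  proof
    show "(\<lambda>i. i mod int n) ` {1..int n} \<subseteq> int ` {..<n}"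
    proof
      fix x assume "x \<in> (\<lambda>i. i mod int n) ` {1..int n}"
      then obtain i where "x = i mod int n" by auto
      then have "0 \<le> x" "x < int n" using assms by auto
      then show "x \<in> int ` {..<n}" by (metis image_eqI lessThan_iff nat_less_iff int_nat_eq)
    qed
    show "int ` {..<n} \<subseteq> (\<lambda>i. i mod int n) ` {1..int n}"
    proof
      fix x assume "x \<in> int ` {..<n}"
      then obtain r where r: "r < n" "x = int r" by auto
      show "x \<in> (\<lambda>i. i mod int n) ` {1..int n}"
      proof (cases "r = 0")
        case True
        then have "x = int n mod int n" using r by simp
        moreover have "int n \<in> {1..int n}" using assms by simp
        ultimately show ?thesis by blast
      next
        case False
        then have "x = x mod int n" "x \<in> {1..int n}" using r by auto
        then show ?thesis by blast
      qed
    qed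
  qed
  also have "mset_set (int ` {..<n}) = image_mset int (mset_set {..<n})"
    by (simp add: image_mset_mset_set)
  finally have "mset (aff_code n u) = image_mset (\<lambda>r. cf u (int r)) (mset_set {..<n})"
    by (simp add: image_mset.compositionality comp_def)
  moreover have "(\<lambda>r. cf u (int r)) = cv u" by (rule ext) (simp add: cv_def)
  ultimately show ?thesis by simp
qed

definition Mw :: "nat \<Rightarrow> (int \<Rightarrow> int) \<Rightarrow> nat multiset" where
  "Mw n w = image_mset (cv (inv w)) (mset_set {..<n})"

lemma lam_eq: assumes "n > 0" "affine_perm n w" shows "lam n w = LM (Mw n w)"
  unfolding lam_def Mw_def conj_rev_sort
  using code_mset[OF per_inv[OF affine_per[OF assms(2)]] assms(1)] by simp

lemma sum_min_suc: "sum_mset (image_mset (\<lambda>x. min x (Suc j)) M)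
   = sum_mset (image_mset (\<lambda>x. min x j) M) + size (filter_mset (\<lambda>x. Suc j \<le> x) M)"
  by (induction M) auto

lemma LM_len: "length (LM M) = Max (insert 0 (set_mset M))"
  unfolding LM_def by simp

lemma LM_nth: "j < Max (insert 0 (set_mset M)) \<Longrightarrow> LM M ! j = size (filter_mset (\<lambda>x. Suc j \<le> x) M)"
  unfolding LM_def by (subst nth_map) (simp_all add: nth_upt del: upt_Suc)

lemma LM_take: "sum_list (take j (LM M)) = sum_mset (image_mset (\<lambda>x. min x j) M)"
proof (induction j)
  case 0 then show ?case by simp
next
  case (Suc j)
  let ?m = "Max (insert 0 (set_mset M))"
  have sm: "sum_mset (image_mset (\<lambda>x. min x (Suc j)) M)
     = sum_mset (image_mset (\<lambda>x. min x j) M) + size (filter_mset (\<lambda>x. Suc j \<le> x) M)"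
    by (rule sum_min_suc)
  show ?case
  proof (cases "j < ?m")
    case True
    have "take (Suc j) (LM M) = take j (LM M) @ [LM M ! j]"
      using True LM_len[of M] by (simp add: take_Suc_conv_app_nth)
    then have "sum_list (take (Suc j) (LM M)) = sum_list (take j (LM M)) + LM M ! j" by simp
    then show ?thesis using Suc.IH sm LM_nth[OF True] by simp
  next
    case False
    have "filter_mset (\<lambda>x. Suc j \<le> x) M = {#}"
    proof (rule filter_mset_eq_mempty_iff[THEN iffD2], intro allI impI)
      fix x assume "x \<in># M"
      then have "x \<le> ?m" by (rule Max0_ge)
      then show "\<not> Suc j \<le> x" using False by simp
    qed
    moreover have "take (Suc j) (LM M) = take j (LM M)"
    proof -
      have "length (LM M) \<le> j" unfolding LM_len using False by linarith
      then show ?thesis by (simp add: take_all)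
    qed
    ultimately show ?thesis using Suc.IH sm by simp
  qed
qed

lemma LM_nz: "0 \<notin> set (LM M)"
proof
  assume "0 \<in> set (LM M)"
  then obtain j where j: "j < length (LM M)" "LM M ! j = 0" by (metis in_set_conv_nth)
  let ?m = "Max (insert 0 (set_mset M))"
  have jm: "j < ?m" using j LM_len by simp
  have mp: "?m > 0" using jm by simp
  have mM: "?m \<in># M" using Max0_in[OF mp] .
  have "?m \<in># filter_mset (\<lambda>x. Suc j \<le> x) M" using mM jm by simp
  then have "size (filter_mset (\<lambda>x. Suc j \<le> x) M) > 0" by (metis empty_iff set_mset_empty size_eq_0_iff_empty neq0_conv)
  then show False using j(2) LM_nth[OF jm] by simp
qed

lemma LM_nil: "(\<forall>x\<in>#M. x = 0) \<Longrightarrow> LM M = []"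
proof -
  assume "\<forall>x\<in>#M. x = 0"
  then have e: "insert 0 (set_mset M) = {0}" by auto
  show ?thesis unfolding LM_def e by simp
qed

lemma size_filter_image: "size (filter_mset P (image_mset f M)) = size (filter_mset (\<lambda>x. P (f x)) M)"
  by (induction M) auto

lemma LM_cons: assumes "\<exists>x\<in>#M. x > 0"
  shows "LM M = size (filter_mset (\<lambda>x. 1 \<le> x) M) # LM (image_mset (\<lambda>x. x - 1) M)"
proof -
  define m where "m = Max (insert 0 (set_mset M))"
  obtain x0 where x0: "x0 \<in># M" "x0 > 0" using assms by blast
  have mp: "m > 0" using Max0_ge[OF x0(1)] x0(2) unfolding m_def by simp
  have mM: "m \<in># M" unfolding m_def using Max0_in mp m_def by simp
  have le: "x \<le> m" if "x \<in># M" for x unfolding m_def using that by (rule Max0_ge)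
  have m1: "Max (insert 0 (set_mset (image_mset (\<lambda>x. x - 1) M))) = m - 1"
  proof (rule Max_eqI)
    show "finite (insert 0 (set_mset (image_mset (\<lambda>x. x - 1) M)))" by simp
    fix y assume "y \<in> insert 0 (set_mset (image_mset (\<lambda>x. x - 1) M))"
    then show "y \<le> m - 1" using le by (auto intro: diff_le_mono)
  next
    show "m - 1 \<in> insert 0 (set_mset (image_mset (\<lambda>x. x - 1) M))" using mM by auto
  qed
  have u: "[1..<Suc m] = 1 # map Suc [1..<m]"
  proof -
    have "[1..<Suc m] = 1 # [Suc 1..<Suc m]" using mp by (simp add: upt_rec)
    also have "[Suc 1..<Suc m] = map Suc [1..<m]" by (rule map_Suc_upt[symmetric])
    finally show ?thesis .
  qed
  have mp2: "map (\<lambda>j. size (filter_mset (\<lambda>x. j \<le> x) M)) (map Suc [1..<m])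
      = map (\<lambda>j. size (filter_mset (\<lambda>x. j \<le> x) (image_mset (\<lambda>x. x - 1) M))) [1..<m]"
    unfolding map_map
  proof (rule map_cong[OF refl])
    fix j assume "j \<in> set [1..<m]"
    then have j1: "j \<ge> 1" by simp
    have "size (filter_mset (\<lambda>x. j \<le> x) (image_mset (\<lambda>x. x - 1) M)) = size (filter_mset (\<lambda>x. j \<le> x - 1) M)"
      by (rule size_filter_image)
    also have "filter_mset (\<lambda>x. j \<le> x - 1) M = filter_mset (\<lambda>x. Suc j \<le> x) M"
      using j1 by (intro filter_mset_cong) auto
    finally show "((\<lambda>j. size (filter_mset (\<lambda>x. j \<le> x) M)) \<circ> Suc) j
        = size (filter_mset (\<lambda>x. j \<le> x) (image_mset (\<lambda>x. x - 1) M))" by simp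
  qed
  have "LM M = map (\<lambda>j. size (filter_mset (\<lambda>x. j \<le> x) M)) [1..<Suc m]" unfolding LM_def m_def ..
  also have "\<dots> = size (filter_mset (\<lambda>x. 1 \<le> x) M) # map (\<lambda>j. size (filter_mset (\<lambda>x. j \<le> x) M)) (map Suc [1..<m])"
    unfolding u by simp
  also have "\<dots> = size (filter_mset (\<lambda>x. 1 \<le> x) M) # LM (image_mset (\<lambda>x. x - 1) M)"
    unfolding mp2 LM_def m1 using mp by simp
  finally show ?thesis .
qed

lemma prefix_eq: "0 \<notin> set a \<Longrightarrow> 0 \<notin> set b \<Longrightarrow> (\<forall>j. sum_list (take j a) = sum_list (take j (b::nat list))) \<Longrightarrow> a = b"
proof (induction a arbitrary: b)
  case Nil
  show ?case
  proof (cases b)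
    case (Cons y ys) then show ?thesis using Nil.prems(3)[rule_format, of 1] Nil.prems(2) by simp
  qed simp
next
  case (Cons x a)
  show ?case
  proof (cases b)
    case Nil then show ?thesis using Cons.prems(3)[rule_format, of 1] Cons.prems(1) by simp
  next
    case (Cons y ys)
    have xy: "x = y" using Cons.prems(3)[rule_format, of 1] Cons by simp
    have "\<forall>j. sum_list (take j a) = sum_list (take j ys)"
    proof
      fix j show "sum_list (take j a) = sum_list (take j ys)"
        using Cons.prems(3)[rule_format, of "Suc j"] Cons xy by simp
    qed
    then have "a = ys" using Cons.IH Cons.prems Cons by simp
    then show ?thesis using xy Cons by simp
  qed
qed

lemma prec_of_le: assumes "0 \<notin> set a" "0 \<notin> set b" "\<forall>j. sum_list (take j a) \<le> sum_list (take j (b::nat list))"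
  shows "part_prec a b"
proof (cases "a = b")
  case True then show ?thesis by (simp add: part_prec_def)
next
  case False
  then have "\<exists>j. sum_list (take j a) \<noteq> sum_list (take j b)" using prefix_eq assms(1,2) by blast
  define k where "k = (LEAST j. sum_list (take j a) \<noteq> sum_list (take j b))"
  have k1: "sum_list (take k a) \<noteq> sum_list (take k b)" unfolding k_def
    using LeastI_ex[OF \<open>\<exists>j. _\<close>] by simp
  have k2: "\<forall>j<k. sum_list (take j a) = sum_list (take j b)" unfolding k_def
    using not_less_Least by blast
  have "k > 0" using k1 by (cases k) auto
  moreover have "sum_list (take k a) < sum_list (take k b)" using k1 assms(3) le_neq_implies_less by blast
  ultimately show ?thesis unfolding part_prec_def using k2 by blast
qed


definition FACT :: "nat \<Rightarrow> (int \<Rightarrow> int) \<Rightarrow> nat list \<Rightarrow> (int \<Rightarrow> int) list \<Rightarrow> bool" where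
  "FACT n w la vs \<longleftrightarrow> length vs = length la \<and>
     (\<forall>i<length vs. cyc_dec n (vs ! i) \<and> aff_length n (vs ! i) = la ! i) \<and>
     foldr (\<circ>) vs id = w \<and> (\<Sum>v\<leftarrow>vs. aff_length n v) = aff_length n w"

lemma mcoeff_eq: "m_coeff n w la = card {vs. FACT n w la vs}"
  unfolding m_coeff_def aff_stanley_monomial_coeff_def FACT_def by simp

lemma cyc_valid: assumes "n > 1" "cyc_dec n v"
  shows "\<exists>ws. valid n ws \<and> word_prod n ws = v \<and> length ws = aff_length n v"
proof -
  obtain ws where ws: "reduced_word n ws v" "distinct ws"
    "\<forall>i p q. i < n \<and> p < length ws \<and> q < length ws \<and> ws ! p = (i + 1) mod n \<and> ws ! q = i \<longrightarrow> p < q"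
    using assms(2) unfolding cyc_dec_def by blast
  have sub: "set ws \<subseteq> {..<n}" using ws(1) reduced_word_def by blast
  have "sorted_wrt (\<lambda>x y. y \<noteq> Suc x mod n) ws"
    unfolding sorted_wrt_iff_nth_less
  proof (intro allI impI)
    fix p q assume pq: "p < q" "q < length ws"
    show "ws ! q \<noteq> Suc (ws ! p) mod n"
    proof
      assume e: "ws ! q = Suc (ws ! p) mod n"
      have "ws ! p < n" using sub pq by (meson lessThan_iff nth_mem order_less_trans subsetD)
      then have "q < p" using ws(3)[rule_format, of "ws ! p" q p] pq e by simp
      then show False using pq by simp
    qed
  qed
  then show ?thesis using ws sub unfolding valid_def reduced_word_def by blast
qed

lemma valid_cyc: assumes "n > 1" "valid n ws" "word_prod n ws = v" "aff_length n v = length ws"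
  shows "cyc_dec n v"
proof -
  have d: "distinct ws" and sub: "set ws \<subseteq> {..<n}" and so: "sorted_wrt (\<lambda>x y. y \<noteq> Suc x mod n) ws"
    using assms(2) valid_def by auto
  have idx: "\<forall>i p q. i < n \<and> p < length ws \<and> q < length ws \<and> ws ! p = (i + 1) mod n \<and> ws ! q = i \<longrightarrow> p < q"
  proof (intro allI impI)
    fix i p q assume h: "i < n \<and> p < length ws \<and> q < length ws \<and> ws ! p = (i + 1) mod n \<and> ws ! q = i"
    show "p < q"
    proof (rule ccontr)
      assume "\<not> p < q"
      then consider "p = q" | "q < p" by linarith
      then show False
      proof cases
        case 1 then have "Suc i mod n = i" using h by simp
        then show False using suc_mod_ne[OF assms(1)] h by blast
      next
        case 2
        then have "ws ! p \<noteq> Suc (ws ! q) mod n" using so[unfolded sorted_wrt_iff_nth_less, rule_format, of q p] h by simp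
        then show False using h by simp
      qed
    qed
  qed
  have "reduced_word n ws v" unfolding reduced_word_def using sub assms(3,4) by simp
  then show ?thesis unfolding cyc_dec_def using d idx by blast
qed

lemma cyc_affine: assumes "n > 1" "cyc_dec n v" shows "affine_perm n v"
proof -
  obtain ws where "word_prod n ws = v" using cyc_valid[OF assms] by blast
  then show ?thesis using affine_wp[OF assms(1), of ws] by simp
qed

lemma affine_comp: assumes "n > 1" "cyc_dec n v" "affine_perm n y" shows "affine_perm n (v \<circ> y)"
proof -
  obtain ws where "word_prod n ws = v" using cyc_valid[OF assms(1,2)] by blast
  then show ?thesis using affine_word[OF assms(1,3), of ws] by simp
qed

lemma affine_foldr: "n > 1 \<Longrightarrow> \<forall>v\<in>set vs. cyc_dec n v \<Longrightarrow> affine_perm n (foldr (\<circ>) vs id)"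
  by (induction vs) (auto simp: affine_id affine_comp)

lemma len_id: "aff_length n id = 0"
proof -
  have w: "word_prod n [] = id" by (rule word_prod_Nil)
  have "aff_length n id \<le> length ([]::nat list)" by (rule len_le[OF _ w]) simp
  then show ?thesis by simp
qed

lemma len_foldr: assumes "n > 2" "\<forall>v\<in>set vs. cyc_dec n v"
  shows "aff_length n (foldr (\<circ>) vs id) \<le> (\<Sum>v\<leftarrow>vs. aff_length n v)"
  using assms(2)
proof (induction vs)
  case Nil
  show ?case using len_id[of n] by (simp add: id_def)
next
  case (Cons v vs)
  have av: "affine_perm n v" using cyc_affine Cons.prems assms(1) by simp
  have ar: "affine_perm n (foldr (\<circ>) vs id)" using affine_foldr Cons.prems assms(1) by simp
  have "aff_length n (v \<circ> foldr (\<circ>) vs id) \<le> aff_length n v + aff_length n (foldr (\<circ>) vs id)"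
    by (rule subadd[OF assms(1) av ar])
  moreover have "aff_length n (foldr (\<circ>) vs id) \<le> (\<Sum>v\<leftarrow>vs. aff_length n v)"
    using Cons.prems by (intro Cons.IH) simp
  moreover have f: "foldr (\<circ>) (v # vs) id = v \<circ> foldr (\<circ>) vs id" by simp
  moreover have "(\<Sum>u\<leftarrow>(v # vs). aff_length n u) = aff_length n v + (\<Sum>u\<leftarrow>vs. aff_length n u)" by simp
  ultimately show ?case unfolding f by linarith
qed

lemma FACT_Cons: assumes "n > 2" "FACT n w (a # la) vs"
  shows "\<exists>v vs'. vs = v # vs' \<and> cyc_dec n v \<and> aff_length n v = a \<and> FACT n (foldr (\<circ>) vs' id) la vs'
     \<and> w = v \<circ> foldr (\<circ>) vs' id \<and> affine_perm n (foldr (\<circ>) vs' id)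
     \<and> aff_length n w = aff_length n v + aff_length n (foldr (\<circ>) vs' id)"
proof -
  obtain v vs' where vs: "vs = v # vs'" using assms(2) unfolding FACT_def by (cases vs) auto
  have len: "length vs' = length la" using assms(2) vs unfolding FACT_def by simp
  have all: "\<forall>i<length vs. cyc_dec n (vs ! i) \<and> aff_length n (vs ! i) = (a # la) ! i"
    using assms(2) unfolding FACT_def by blast
  have cv: "cyc_dec n v" "aff_length n v = a" using all[rule_format, of 0] vs by auto
  have all': "\<forall>i<length vs'. cyc_dec n (vs' ! i) \<and> aff_length n (vs' ! i) = la ! i"
    using all vs by auto
  have cs: "\<forall>u\<in>set vs'. cyc_dec n u" using all' by (metis in_set_conv_nth)
  let ?y = "foldr (\<circ>) vs' id"
  have wy: "w = v \<circ> ?y" using assms(2) vs unfolding FACT_def by simp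
  have sm: "aff_length n v + (\<Sum>u\<leftarrow>vs'. aff_length n u) = aff_length n w"
    using assms(2) vs unfolding FACT_def by simp
  have n1: "n > 1" using assms by simp
  have ay: "affine_perm n ?y" using affine_foldr[OF n1 cs] .
  have av: "affine_perm n v" using cyc_affine[OF n1 cv(1)] .
  have l1: "aff_length n ?y \<le> (\<Sum>u\<leftarrow>vs'. aff_length n u)" using len_foldr[OF assms(1) cs] .
  have l2: "aff_length n w \<le> aff_length n v + aff_length n ?y" using subadd[OF assms(1) av ay] wy by simp
  have e1: "aff_length n ?y = (\<Sum>u\<leftarrow>vs'. aff_length n u)" using l1 l2 sm by linarith
  have e2: "aff_length n w = aff_length n v + aff_length n ?y" using l1 l2 sm by linarith
  have "FACT n ?y la vs'" unfolding FACT_def using len all' e1 by simp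
  then show ?thesis using vs cv wy ay e2 by blast
qed

lemma FACT_ConsI: assumes "cyc_dec n v" "aff_length n v = a" "FACT n y la vs"
  "w = v \<circ> y" "aff_length n w = aff_length n v + aff_length n y"
  shows "FACT n w (a # la) (v # vs)"
proof -
  have len: "length vs = length la" and all: "\<forall>i<length vs. cyc_dec n (vs ! i) \<and> aff_length n (vs ! i) = la ! i"
    and f: "foldr (\<circ>) vs id = y" and s: "(\<Sum>v\<leftarrow>vs. aff_length n v) = aff_length n y"
    using assms(3) unfolding FACT_def by auto
  have "\<forall>i<length (v # vs). cyc_dec n ((v # vs) ! i) \<and> aff_length n ((v # vs) ! i) = (a # la) ! i"
  proof (intro allI impI)
    fix i assume "i < length (v # vs)"
    then show "cyc_dec n ((v # vs) ! i) \<and> aff_length n ((v # vs) ! i) = (a # la) ! i"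
      using all assms(1,2) by (cases i) auto
  qed
  then show ?thesis unfolding FACT_def using len f s assms(4,5) by simp
qed

lemma FACT_Nil: "FACT n w [] vs \<longleftrightarrow> vs = [] \<and> w = id"
  unfolding FACT_def using len_id[of n] by auto

definition Sw :: "nat \<Rightarrow> (int \<Rightarrow> int) \<Rightarrow> nat \<Rightarrow> nat" where
  "Sw n w j = sum_mset (image_mset (\<lambda>x. min x j) (Mw n w))"

lemma Sw_sum: "Sw n w j = (\<Sum>p<n. min (cv (inv w) p) j)"
  unfolding Sw_def Mw_def by (simp add: image_mset.compositionality sum_unfold_sum_mset comp_def)

lemma KC: assumes "n > 2" "cyc_dec n v" "affine_perm n y"
  "aff_length n (v \<circ> y) = aff_length n v + aff_length n y"
  shows "Sw n y j + aff_length n v \<le> Sw n (v \<circ> y) (Suc j)"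
proof -
  have n1: "n > 1" using assms by simp
  obtain ws where ws: "valid n ws" "word_prod n ws = v" "length ws = aff_length n v"
    using cyc_valid[OF n1 assms(2)] by blast
  have l: "aff_length n (word_prod n ws \<circ> y) = aff_length n y + length ws" using assms(4) ws by simp
  obtain g f where gf: "\<forall>p<n. cv (inv (word_prod n ws \<circ> y)) p = g p + f p"
     "image_mset g (mset_set {..<n}) = image_mset (cv (inv y)) (mset_set {..<n})"
     "\<forall>p<n. f p \<le> 1" "(\<Sum>p<n. f p) = length ws"
    using K[OF assms(1) ws(1) assms(3) l] by blast
  have "Sw n y j = (\<Sum>p<n. min (g p) j)"
  proof -
    have "Sw n y j = sum_mset (image_mset (\<lambda>x. min x j) (image_mset (cv (inv y)) (mset_set {..<n})))"
      unfolding Sw_def Mw_def ..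
    also have "\<dots> = sum_mset (image_mset (\<lambda>x. min x j) (image_mset g (mset_set {..<n})))" using gf(2) by simp
    also have "\<dots> = (\<Sum>p<n. min (g p) j)" by (simp add: image_mset.compositionality sum_unfold_sum_mset comp_def)
    finally show ?thesis .
  qed
  moreover have "(\<Sum>p<n. min (g p) j) + (\<Sum>p<n. f p) \<le> (\<Sum>p<n. min (g p + f p) (Suc j))"
  proof -
    have "(\<Sum>p<n. min (g p) j) + (\<Sum>p<n. f p) = (\<Sum>p<n. min (g p) j + f p)" by (simp add: sum.distrib)
    also have "\<dots> \<le> (\<Sum>p<n. min (g p + f p) (Suc j))"
    proof (rule sum_mono)
      fix p assume "p \<in> {..<n}"
      then have "f p \<le> 1" using gf(3) by simp
      then show "min (g p) j + f p \<le> min (g p + f p) (Suc j)" by linarith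
    qed
    finally show ?thesis .
  qed
  moreover have "(\<Sum>p<n. min (g p + f p) (Suc j)) = Sw n (v \<circ> y) (Suc j)"
    unfolding Sw_sum using gf(1) ws(2) by (intro sum.cong) auto
  ultimately show ?thesis using gf(4) ws(3) by simp
qed

lemma part1_bound: assumes "n > 2" "FACT n w la vs"
  shows "sum_list (take j la) \<le> Sw n w j"
  using assms(2)
proof (induction la arbitrary: vs w j)
  case Nil then show ?case by simp
next
  case (Cons a la)
  obtain v vs' where d: "vs = v # vs'" "cyc_dec n v" "aff_length n v = a"
    "FACT n (foldr (\<circ>) vs' id) la vs'" "w = v \<circ> foldr (\<circ>) vs' id"
    "affine_perm n (foldr (\<circ>) vs' id)"
    "aff_length n w = aff_length n v + aff_length n (foldr (\<circ>) vs' id)"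
    using FACT_Cons[OF assms(1) Cons.prems] by blast
  show ?case
  proof (cases j)
    case 0 then show ?thesis by simp
  next
    case (Suc j')
    have "sum_list (take j (a # la)) = a + sum_list (take j' la)" using Suc by simp
    also have "\<dots> \<le> aff_length n v + Sw n (foldr (\<circ>) vs' id) j'" using Cons.IH[OF d(4)] d(3) by simp
    also have "\<dots> \<le> Sw n w j"
    proof -
      have "Sw n w j = Sw n (v \<circ> foldr (\<circ>) vs' id) (Suc j')" using d(5) Suc by simp
      moreover have "aff_length n (v \<circ> foldr (\<circ>) vs' id) = aff_length n v + aff_length n (foldr (\<circ>) vs' id)"
        using d(5,7) by simp
      ultimately show ?thesis using KC[OF assms(1) d(2) d(6), of j'] by linarith
    qed
    finally show ?thesis .
  qed
qed

lemma part1: assumes "n > 2" "affine_perm n w" "is_partition la" "m_coeff n w la \<noteq> 0"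
  shows "part_prec la (lam n w)"
proof -
  have n0: "n > 0" using assms by simp
  have "{vs. FACT n w la vs} \<noteq> {}" using assms(4) mcoeff_eq[of n w la] by (metis card.empty)
  then obtain vs where vs: "FACT n w la vs" by blast
  have le: "\<forall>j. sum_list (take j la) \<le> sum_list (take j (lam n w))"
  proof
    fix j
    have "sum_list (take j (lam n w)) = Sw n w j"
      unfolding lam_eq[OF n0 assms(2)] Sw_def LM_take using assms(1) by simp
    then show "sum_list (take j la) \<le> sum_list (take j (lam n w))" using part1_bound[OF assms(1) vs] by simp
  qed
  have z1: "0 \<notin> set la" using assms(3) is_partition_def by simp
  have z2: "0 \<notin> set (lam n w)" unfolding lam_eq[OF n0 assms(2)] using assms(1) LM_nz by simp
  show ?thesis by (rule prec_of_le[OF z1 z2 le])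
qed


lemma size_filter_D: "size (filter_mset (\<lambda>x. 1 \<le> x) (Mw n w)) = card {p. p < n \<and> cv (inv w) p > 0}"
proof -
  have "size (filter_mset (\<lambda>x. 1 \<le> x) (Mw n w)) = size (filter_mset (\<lambda>p. 1 \<le> cv (inv w) p) (mset_set {..<n}))"
    unfolding Mw_def by (rule size_filter_image)
  also have "\<dots> = card {p \<in> {..<n}. 1 \<le> cv (inv w) p}" by simp
  also have "{p \<in> {..<n}. 1 \<le> cv (inv w) p} = {p. p < n \<and> cv (inv w) p > 0}" by auto
  finally show ?thesis .
qed

lemma Mw_zero: "(\<forall>x\<in>#Mw n w. x = 0) \<longleftrightarrow> {p. p < n \<and> cv (inv w) p > 0} = {}"
  unfolding Mw_def by auto

lemma Mw_dec: assumes "n > 1" "\<forall>p<n. cv (inv y) p = cv (inv w) (prr n p) - 1"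
  shows "Mw n y = image_mset (\<lambda>x. x - 1) (Mw n w)"
proof -
  have "Mw n y = image_mset (\<lambda>p. (\<lambda>q. cv (inv w) q - 1) (prr n p)) (mset_set {..<n})"
    unfolding Mw_def using assms(2) by (intro image_mset_cong) auto
  also have "\<dots> = image_mset (\<lambda>q. cv (inv w) q - 1) (mset_set {..<n})" by (rule mset_prr[OF assms(1)])
  also have "\<dots> = image_mset (\<lambda>x. x - 1) (Mw n w)"
    unfolding Mw_def by (simp add: image_mset.compositionality comp_def)
  finally show ?thesis .
qed

lemma zero_is_id: assumes "n > 2" "affine_perm n w" "{p. p < n \<and> cv (inv w) p > 0} = {}"
  shows "w = id"
proof -
  have "Ninv n (inv w) = 0" unfolding Ninv_def using assms(3) by (intro sum.neutral) auto
  then obtain ws where "set ws \<subseteq> {..<n}" "word_prod n ws = w" "length ws = 0"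
    using word_exists[OF assms(1,2)] by auto
  then show ?thesis by (simp add: word_prod_Nil)
qed

lemma comp_cancel: assumes "bij v" "v \<circ> a = v \<circ> b" shows "a = b"
proof
  fix x have "v (a x) = v (b x)" using assms(2) by (metis comp_apply)
  then show "a x = b x" using assms(1) by (simp add: bij_is_inj inj_eq)
qed

lemma f_full: assumes "finite S" "S \<subseteq> {..<n}" "\<forall>p<n. (f::nat\<Rightarrow>nat) p \<le> 1"
  "\<forall>p<n. f p = 1 \<longrightarrow> p \<in> S" "(\<Sum>p<n. f p) = card S"
  shows "\<forall>p\<in>S. f p = 1"
proof (rule ccontr)
  assume "\<not> (\<forall>p\<in>S. f p = 1)"
  then obtain q where q: "q \<in> S" "f q \<noteq> 1" by blast
  have "(\<Sum>p<n. f p) = (\<Sum>p\<in>S. f p)"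
  proof (rule sum.mono_neutral_right)
    show "finite {..<n}" by simp
    show "S \<subseteq> {..<n}" by (rule assms(2))
    show "\<forall>i\<in>{..<n} - S. f i = 0"
    proof
      fix i assume "i \<in> {..<n} - S"
      then have "i < n" "i \<notin> S" by auto
      then show "f i = 0" using assms(3,4) by (metis le_neq_implies_less less_one)
    qed
  qed
  also have "(\<Sum>p\<in>S. f p) < (\<Sum>p\<in>S. 1)"
  proof (rule sum_strict_mono_ex1[OF assms(1)])
    show "\<forall>x\<in>S. f x \<le> 1" using assms(2,3) by auto
    show "\<exists>a\<in>S. f a < 1" using q assms(2,3) by (metis le_neq_implies_less lessThan_iff subsetD)
  qed
  also have "\<dots> = card S" by simp
  finally show False using assms(5) by simp
qed


lemma part2: assumes "n > 2" "affine_perm n w"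
  shows "(\<exists>vs. FACT n w (lam n w) vs) \<and> (\<forall>vs1 vs2. FACT n w (lam n w) vs1 \<longrightarrow> FACT n w (lam n w) vs2 \<longrightarrow> vs1 = vs2)"
  using assms(2)
proof (induction "aff_length n w" arbitrary: w rule: less_induct)
  case less
  have n0: "n > 0" and n1: "n > 1" using assms by auto
  let ?c = "cv (inv w)"
  let ?D = "{p. p < n \<and> cv (inv w) p > 0}"
  show ?case
  proof (cases "?D = {}")
    case True
    have "lam n w = []" unfolding lam_eq[OF n0 less.prems] using Mw_zero[of n w] True LM_nil by blast
    moreover have "w = id" using zero_is_id[OF assms(1) less.prems True] .
    ultimately show ?thesis using FACT_Nil by auto
  next
    case False
    have pu: "per n (inv w)" using per_inv affine_per less.prems by blast
    obtain z where z: "z < n" "?c z = 0" using zero_code[OF n0 pu] by blast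
    have zD: "z \<notin> ?D" using z by simp
    have Dsub: "?D \<subseteq> {..<n}" by auto
    define ws where "ws = canon n z ?D"
    have ws: "valid n ws" "set ws = ?D" using canon_valid[OF z(1) Dsub zD] unfolding ws_def by auto
    define y where "y = foldl (\<lambda>x a. s_gen n a \<circ> x) w ws"
    have pl: "affine_perm n y" "word_prod n ws \<circ> y = w" "aff_length n y + length ws = aff_length n w"
      "\<forall>p<n. cv (inv y) p = ?c (prr n p) - 1"
      using peel[OF assms(1) less.prems ws] unfolding y_def by auto
    have lenws: "length ws = card ?D" using ws distinct_card[of ws] unfolding valid_def by simp
    have cD: "card ?D > 0" using False by (simp add: card_gt_0_iff)
    have lt: "aff_length n y < aff_length n w" using pl(3) lenws cD by simp
    have IH: "(\<exists>vs. FACT n y (lam n y) vs) \<and> (\<forall>vs1 vs2. FACT n y (lam n y) vs1 \<longrightarrow> FACT n y (lam n y) vs2 \<longrightarrow> vs1 = vs2)"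
      using less.hyps[OF lt pl(1)] .
    have ex: "\<exists>x\<in>#Mw n w. x > 0" using Mw_zero[of n w] False by (metis gr0I)
    have lamw: "lam n w = card ?D # lam n y"
      unfolding lam_eq[OF n0 less.prems] lam_eq[OF n0 pl(1)] LM_cons[OF ex] size_filter_D
        Mw_dec[OF n1 pl(4)] ..
    let ?V = "word_prod n ws"
    have aV: "affine_perm n ?V" using affine_wp n1 by simp
    have lV1: "aff_length n ?V \<le> length ws" using ws(1) by (intro len_le) (auto simp: valid_def)
    have lV2: "aff_length n w \<le> aff_length n ?V + aff_length n y" using subadd[OF assms(1) aV pl(1)] pl(2) by simp
    have lV: "aff_length n ?V = length ws" using lV1 lV2 pl(3) by linarith
    have cV: "cyc_dec n ?V" using valid_cyc[OF n1 ws(1) refl lV] .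
    have lw: "aff_length n w = aff_length n ?V + aff_length n y" using lV pl(3) by simp
    have key: "\<exists>r. vs1 = ?V # r \<and> FACT n y (lam n y) r" if h: "FACT n w (lam n w) vs1" for vs1
    proof -
      have h': "FACT n w (card ?D # lam n y) vs1" using h lamw by simp
      obtain v1 r1 where d: "vs1 = v1 # r1" "cyc_dec n v1" "aff_length n v1 = card ?D"
        "FACT n (foldr (\<circ>) r1 id) (lam n y) r1" "w = v1 \<circ> foldr (\<circ>) r1 id"
        "affine_perm n (foldr (\<circ>) r1 id)"
        "aff_length n w = aff_length n v1 + aff_length n (foldr (\<circ>) r1 id)"
        using FACT_Cons[OF assms(1) h'] by blast
      define y1 where "y1 = foldr (\<circ>) r1 id"
      obtain ws1 where w1: "valid n ws1" "word_prod n ws1 = v1" "length ws1 = aff_length n v1"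
        using cyc_valid[OF n1 d(2)] by blast
      have l1: "aff_length n (word_prod n ws1 \<circ> y1) = aff_length n y1 + length ws1"
        using d(5,7) w1 unfolding y1_def by simp
      obtain g f where gf: "\<forall>p<n. cv (inv (word_prod n ws1 \<circ> y1)) p = g p + f p"
        "\<forall>p<n. f p \<le> 1" "\<forall>p<n. f p = 1 \<longrightarrow> p \<in> set ws1" "(\<Sum>p<n. f p) = length ws1"
        using K[OF assms(1) w1(1) d(6)[folded y1_def] l1] by blast
      have wv: "word_prod n ws1 \<circ> y1 = w" using d(5) w1(2) unfolding y1_def by simp
      have s1: "set ws1 \<subseteq> {..<n}" "distinct ws1" using w1(1) valid_def by auto
      have cs1: "card (set ws1) = length ws1" using distinct_card[OF s1(2)] .
      have f1: "\<forall>p\<in>set ws1. f p = 1" using f_full[OF _ s1(1) gf(2) gf(3)] gf(4) cs1 by simp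
      have sub: "set ws1 \<subseteq> ?D"
      proof
        fix p assume p: "p \<in> set ws1"
        then have pn: "p < n" using s1 by auto
        have "?c p = g p + f p" using gf(1) pn wv by simp
        then show "p \<in> ?D" using f1 p pn by simp
      qed
      have eqD: "set ws1 = ?D"
        using card_subset_eq[OF _ sub] cs1 w1(3) d(3) by simp
      have vV: "v1 = ?V" using set_determines[OF assms(1) w1(1) ws(1)] eqD ws(2) w1(2) by simp
      have "?V \<circ> y1 = ?V \<circ> y" using d(5) vV pl(2) unfolding y1_def by simp
      then have "y1 = y" using comp_cancel affine_bij[OF aV] by blast
      then show ?thesis using d(1,4) vV unfolding y1_def by simp
    qed
    show ?thesis
    proof
      obtain vs' where vs': "FACT n y (lam n y) vs'" using IH by blast
      have "FACT n w (card ?D # lam n y) (?V # vs')"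
        using FACT_ConsI[OF cV _ vs' pl(2)[symmetric]] lV lenws lw by simp
      then show "\<exists>vs. FACT n w (lam n w) vs" using lamw by auto
    next
      show "\<forall>vs1 vs2. FACT n w (lam n w) vs1 \<longrightarrow> FACT n w (lam n w) vs2 \<longrightarrow> vs1 = vs2"
      proof (intro allI impI)
        fix vs1 vs2 assume "FACT n w (lam n w) vs1" "FACT n w (lam n w) vs2"
        then obtain r1 r2 where "vs1 = ?V # r1" "FACT n y (lam n y) r1" "vs2 = ?V # r2" "FACT n y (lam n y) r2"
          using key by blast
        then show "vs1 = vs2" using IH by blast
      qed
    qed
  qed
qed

theorem proposition3p4:
  fixes n :: nat and w :: "int \<Rightarrow> int"
  assumes "n > 2" and "affine_perm n w"
  shows "(\<forall>la. is_partition la \<and> m_coeff n w la \<noteq> 0 \<longrightarrow> part_prec la (lam n w))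
         \<and> m_coeff n w (lam n w) = 1"
proof
  show "\<forall>la. is_partition la \<and> m_coeff n w la \<noteq> 0 \<longrightarrow> part_prec la (lam n w)"
    using part1[OF assms] by blast
  obtain vs where vs: "FACT n w (lam n w) vs" using part2[OF assms] by blast
  have "{vs. FACT n w (lam n w) vs} = {vs}" using part2[OF assms] vs by blast
  then show "m_coeff n w (lam n w) = 1" unfolding mcoeff_eq by simp
qed


end
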